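(* Let $H$ be a graph. The following are equivalent: (i) for every $H$-free graph $G$ and every integer $\ell \ge \chi(G)+1$, the graph $G$ is $\ell$-mixing; (ii) $H$ is an induced subgraph of $P_4$ or an induced subgraph of $P_3+P_1$.
   Context: All graphs are finite and simple. A $k$-colouring of $G$ is a map $\alpha: V(G)\to\{1,\dots,k\}$ with $\alpha(u)\neq\alpha(v)$ for every edge $uv$; $\chi(G)$ is the least $k$ for which a $k$-colouring exists. The reconfiguration graph $\mathcal{R}_k(G)$ has the $k$-colourings of $G$ as vertices, two colourings being adjacent if they differ on exactly one vertex. $G$ is $k$-mixing if $\mathcal{R}_k(G)$ is connected. A graph is $H$-free if it has no induced subgraph isomorphic to $H$. $P_n$ is the path on $n$ vertices, and $G_1+G_2$ denotes the disjoint union of $G_1$ and $G_2$. *)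

theory Defs
  imports Main
begin

definition simple_graph :: "'a set \<Rightarrow> 'a set set \<Rightarrow> bool" where
  "simple_graph V E \<longleftrightarrow> finite V \<and>
     (\<forall>e\<in>E. \<exists>u v. e = {u, v} \<and> u \<noteq> v \<and> u \<in> V \<and> v \<in> V)"

text \<open>k-colourings alpha : V -> {1..k}; outside V the map is fixed to 0 so that
  colourings are determined by their values on V.\<close>
definition colourings :: "'a set \<Rightarrow> 'a set set \<Rightarrow> nat \<Rightarrow> ('a \<Rightarrow> nat) set" where
  "colourings V E k = {\<alpha>. (\<forall>v\<in>V. \<alpha> v \<in> {1..k}) \<and> (\<forall>v. v \<notin> V \<longrightarrow> \<alpha> v = 0)
      \<and> (\<forall>u v. {u, v} \<in> E \<longrightarrow> \<alpha> u \<noteq> \<alpha> v)}"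

definition chromatic_number :: "'a set \<Rightarrow> 'a set set \<Rightarrow> nat" where
  "chromatic_number V E = (LEAST k. colourings V E k \<noteq> {})"

text \<open>Edge relation of the reconfiguration graph R_k(G): colourings differing on
  exactly one vertex.\<close>
definition recolour_rel :: "'a set \<Rightarrow> 'a set set \<Rightarrow> nat \<Rightarrow> (('a \<Rightarrow> nat) \<times> ('a \<Rightarrow> nat)) set" where
  "recolour_rel V E k = {(\<alpha>, \<beta>). \<alpha> \<in> colourings V E k \<and> \<beta> \<in> colourings V E k
      \<and> card {v. \<alpha> v \<noteq> \<beta> v} = 1}"

text \<open>G is k-mixing iff R_k(G) is connected.\<close>
definition mixing :: "'a set \<Rightarrow> 'a set set \<Rightarrow> nat \<Rightarrow> bool" where
  "mixing V E k \<longleftrightarrow>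
     (\<forall>\<alpha>\<in>colourings V E k. \<forall>\<beta>\<in>colourings V E k. (\<alpha>, \<beta>) \<in> (recolour_rel V E k)\<^sup>*)"

definition induced_subgraph :: "'a set \<Rightarrow> 'a set set \<Rightarrow> 'b set \<Rightarrow> 'b set set \<Rightarrow> bool" where
  "induced_subgraph VH EH VG EG \<longleftrightarrow> (\<exists>f. inj_on f VH \<and> f ` VH \<subseteq> VG \<and>
     (\<forall>u\<in>VH. \<forall>v\<in>VH. {u, v} \<in> EH \<longleftrightarrow> {f u, f v} \<in> EG))"

definition P4_V :: "nat set" where "P4_V = {0, 1, 2, 3}"
definition P4_E :: "nat set set" where "P4_E = {{0, 1}, {1, 2}, {2, 3}}"

definition P3P1_V :: "nat set" where "P3P1_V = {0, 1, 2, 3}"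
definition P3P1_E :: "nat set set" where "P3P1_E = {{0, 1}, {1, 2}}"

end

theory Submission
  imports Defs
begin


definition proper :: "'a set \<Rightarrow> 'a set set \<Rightarrow> nat set \<Rightarrow> ('a \<Rightarrow> nat) \<Rightarrow> bool" where
  "proper V E C \<alpha> \<longleftrightarrow> (\<forall>v\<in>V. \<alpha> v \<in> C) \<and> (\<forall>u\<in>V. \<forall>v\<in>V. {u,v} \<in> E \<longrightarrow> \<alpha> u \<noteq> \<alpha> v)"

definition mv :: "'a set \<Rightarrow> 'a set set \<Rightarrow> nat set \<Rightarrow> (('a \<Rightarrow> nat) \<times> ('a \<Rightarrow> nat)) set" where
  "mv V E C = {(\<alpha>,\<beta>). proper V E C \<alpha> \<and> proper V E C \<beta> \<and> (\<exists>v\<in>V. \<forall>u. u \<noteq> v \<longrightarrow> \<alpha> u = \<beta> u)}"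

definition colorable :: "'a set \<Rightarrow> 'a set set \<Rightarrow> nat \<Rightarrow> bool" where
  "colorable V E k \<longleftrightarrow> (\<exists>C0 \<gamma>. finite C0 \<and> card C0 \<le> k \<and> proper V E C0 \<gamma>)"

definition good :: "'a set \<Rightarrow> 'a set set \<Rightarrow> bool" where
  "good V E \<longleftrightarrow> (\<forall>C k \<alpha> \<beta>. finite C \<and> colorable V E k \<and> k + 1 \<le> card C \<and> proper V E C \<alpha> \<and>
      proper V E C \<beta> \<and> (\<forall>u. u \<notin> V \<longrightarrow> \<alpha> u = \<beta> u) \<longrightarrow> (\<alpha>,\<beta>) \<in> (mv V E C)\<^sup>*)"

definition ucl :: "'a set \<Rightarrow> 'a set set \<Rightarrow> bool" where
  "ucl V E \<longleftrightarrow> (\<forall>C k \<alpha>. finite C \<and> colorable V E k \<and> k + 1 \<le> card C \<and> proper V E C \<alpha> \<longrightarrow>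
      (\<exists>\<beta>. (\<alpha>,\<beta>) \<in> (mv V E C)\<^sup>* \<and> (\<exists>c\<in>C. \<forall>v\<in>V. \<beta> v \<noteq> c)))"

lemma mv_sym:
  assumes "(\<alpha>,\<beta>) \<in> mv V E C" shows "(\<beta>,\<alpha>) \<in> mv V E C"
proof -
  from assms obtain v where v: "v\<in>V" "\<forall>u. u\<noteq>v \<longrightarrow> \<alpha> u = \<beta> u" "proper V E C \<alpha>" "proper V E C \<beta>"
    unfolding mv_def by auto
  then have "\<forall>u. u\<noteq>v \<longrightarrow> \<beta> u = \<alpha> u" by simp
  then show ?thesis unfolding mv_def using v by blast
qed

lemma conn_sym: "(\<alpha>,\<beta>) \<in> (mv V E C)\<^sup>* \<Longrightarrow> (\<beta>,\<alpha>) \<in> (mv V E C)\<^sup>*"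
proof (induction rule: rtrancl_induct)
  case base then show ?case by simp
next
  case (step y z)
  then show ?case using mv_sym by (meson converse_rtrancl_into_rtrancl)
qed

lemma conn_off: "(\<alpha>,\<beta>) \<in> (mv V E C)\<^sup>* \<Longrightarrow> u \<notin> V \<Longrightarrow> \<alpha> u = \<beta> u"
proof (induction rule: rtrancl_induct)
  case base then show ?case by simp
next
  case (step y z)
  then obtain v where "v \<in> V" "\<forall>u. u \<noteq> v \<longrightarrow> y u = z u" unfolding mv_def by auto
  then have "y u = z u" using step.prems by metis
  then show ?case using step by simp
qed

lemma conn_proper: "(\<alpha>,\<beta>) \<in> (mv V E C)\<^sup>* \<Longrightarrow> proper V E C \<alpha> \<Longrightarrow> proper V E C \<beta>"
proof (induction rule: rtrancl_induct)
  case base then show ?case by simp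
next
  case (step y z)
  then show ?case unfolding mv_def by auto
qed

lemma proper_mono: "proper V E C \<alpha> \<Longrightarrow> V' \<subseteq> V \<Longrightarrow> C \<subseteq> C' \<Longrightarrow> proper V' E C' \<alpha>"
  unfolding proper_def by blast

lemma colorable_mono: "colorable V E k \<Longrightarrow> V' \<subseteq> V \<Longrightarrow> colorable V' E k"
proof -
  assume a: "colorable V E k" "V' \<subseteq> V"
  then obtain C0 \<gamma> where "finite C0" "card C0 \<le> k" "proper V E C0 \<gamma>" unfolding colorable_def by auto
  then have "proper V' E C0 \<gamma>" using proper_mono[OF _ a(2), of E C0 \<gamma> C0] by simp
  then show ?thesis unfolding colorable_def using \<open>finite C0\<close> \<open>card C0 \<le> k\<close> by blast
qed

lemma lift:
  assumes "(\<alpha>,\<beta>) \<in> (mv V' E C')\<^sup>*" "V' \<subseteq> V" "C' \<subseteq> C" "proper V E C \<alpha>"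
    and cross: "\<forall>u\<in>V'. \<forall>w\<in>V-V'. {u,w} \<in> E \<longrightarrow> \<alpha> w \<notin> C'"
  shows "(\<alpha>,\<beta>) \<in> (mv V E C)\<^sup>*"
proof -
  have pr: "proper V E C \<gamma>" if "proper V' E C' \<gamma>" "\<forall>u. u \<notin> V' \<longrightarrow> \<gamma> u = \<alpha> u" for \<gamma>
  proof -
    have "\<gamma> v \<in> C" if "v \<in> V" for v
    proof (cases "v \<in> V'")
      case True
      then show ?thesis using \<open>proper V' E C' \<gamma>\<close> assms(3) unfolding proper_def by blast
    next
      case False
      then show ?thesis using \<open>\<forall>u. u \<notin> V' \<longrightarrow> \<gamma> u = \<alpha> u\<close> assms(4) that unfolding proper_def by auto
    qed
    moreover have "\<gamma> u \<noteq> \<gamma> v" if "u\<in>V" "v\<in>V" "{u,v} \<in> E" for u v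
    proof (cases "u \<in> V'")
      case True
      show ?thesis
      proof (cases "v \<in> V'")
        case True
        then show ?thesis using \<open>u \<in> V'\<close> \<open>proper V' E C' \<gamma>\<close> that unfolding proper_def by blast
      next
        case False
        then have "\<gamma> v = \<alpha> v" "\<alpha> v \<notin> C'" using \<open>\<forall>u. u \<notin> V' \<longrightarrow> \<gamma> u = \<alpha> u\<close> cross that True by auto
        moreover have "\<gamma> u \<in> C'" using True \<open>proper V' E C' \<gamma>\<close> unfolding proper_def by blast
        ultimately show ?thesis by auto
      qed
    next
      case False
      show ?thesis
      proof (cases "v \<in> V'")
        case True
        have "{v,u} \<in> E" using that by (simp add: insert_commute)
        then have "\<gamma> u = \<alpha> u" "\<alpha> u \<notin> C'" using \<open>\<forall>u. u \<notin> V' \<longrightarrow> \<gamma> u = \<alpha> u\<close> cross that True False by auto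
        moreover have "\<gamma> v \<in> C'" using True \<open>proper V' E C' \<gamma>\<close> unfolding proper_def by blast
        ultimately show ?thesis by auto
      next
        case F2: False
        then show ?thesis using False \<open>\<forall>u. u \<notin> V' \<longrightarrow> \<gamma> u = \<alpha> u\<close> assms(4) that unfolding proper_def by auto
      qed
    qed
    ultimately show ?thesis unfolding proper_def by blast
  qed
  have "(\<alpha>,\<beta>) \<in> (mv V E C)\<^sup>* \<and> (\<forall>u. u \<notin> V' \<longrightarrow> \<beta> u = \<alpha> u)"
    using assms(1)
  proof (induction rule: rtrancl_induct)
    case base then show ?case by simp
  next
    case (step y z)
    then obtain v where v: "v \<in> V'" "\<forall>u. u \<noteq> v \<longrightarrow> y u = z u" "proper V' E C' y" "proper V' E C' z"
      unfolding mv_def by auto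
    then have zo: "\<forall>u. u \<notin> V' \<longrightarrow> z u = \<alpha> u" using step by metis
    have "(y,z) \<in> mv V E C" unfolding mv_def using pr[OF v(3)] pr[OF v(4) zo] v(1,2) step assms(2) by auto
    then show ?case using step zo by auto
  qed
  then show ?thesis by simp
qed

lemma col_exists:
  assumes "colorable V E k" "finite C" "k \<le> card C"
  shows "\<exists>\<rho>. proper V E C \<rho>"
proof -
  obtain C0 \<gamma> where g: "finite C0" "card C0 \<le> k" "proper V E C0 \<gamma>" using assms(1) unfolding colorable_def by auto
  obtain f where f: "f ` C0 \<subseteq> C" "inj_on f C0" using card_le_inj[OF g(1) assms(2)] g(2) assms(3) by auto
  have "proper V E C (f \<circ> \<gamma>)" unfolding proper_def
  proof (intro conjI ballI impI)
    fix v assume "v \<in> V" then show "(f \<circ> \<gamma>) v \<in> C" using g(3) f(1) unfolding proper_def by auto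
  next
    fix u v assume uv: "u \<in> V" "v \<in> V" "{u,v} \<in> E"
    then have "\<gamma> u \<noteq> \<gamma> v" "\<gamma> u \<in> C0" "\<gamma> v \<in> C0" using g(3) unfolding proper_def by auto
    then show "(f \<circ> \<gamma>) u \<noteq> (f \<circ> \<gamma>) v" using f(2) unfolding inj_on_def by auto
  qed
  then show ?thesis by blast
qed

lemma proper_setcol:
  assumes "proper V E C \<alpha>" "S \<subseteq> V" "\<forall>u\<in>S. \<forall>w\<in>S. {u,w} \<notin> E" "e \<in> C" "\<forall>v\<in>V-S. \<alpha> v \<noteq> e" "X \<subseteq> S"
  shows "proper V E C (\<lambda>u. if u \<in> X then e else \<alpha> u)"
proof -
  let ?g = "\<lambda>u. if u \<in> X then e else \<alpha> u"
  have "?g v \<in> C" if "v \<in> V" for v using assms that unfolding proper_def by auto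
  moreover have "?g u \<noteq> ?g v" if "u\<in>V" "v\<in>V" "{u,v} \<in> E" for u v
  proof -
    have "\<not> (u \<in> X \<and> v \<in> X)" using assms(3,6) that(3) by blast
    moreover have "\<alpha> u \<noteq> \<alpha> v" using assms(1) that unfolding proper_def by blast
    moreover have "u \<in> X \<Longrightarrow> v \<notin> S" using assms(3,6) that(3) by blast
    moreover have "v \<in> X \<Longrightarrow> u \<notin> S" using assms(3,6) that(3) by (metis insert_commute subsetD)
    ultimately show ?thesis using assms(5) that(1,2) by auto
  qed
  ultimately show ?thesis unfolding proper_def by blast
qed

lemma recol_set:
  assumes "proper V E C \<alpha>" "S \<subseteq> V" "finite S" "\<forall>u\<in>S. \<forall>w\<in>S. {u,w} \<notin> E" "e \<in> C" "\<forall>v\<in>V-S. \<alpha> v \<noteq> e"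
  shows "(\<alpha>, (\<lambda>u. if u \<in> S then e else \<alpha> u)) \<in> (mv V E C)\<^sup>*"
proof -
  have PS: "proper V E C (\<lambda>u. if u \<in> X then e else \<alpha> u)" if "X \<subseteq> S" for X
    using proper_setcol[OF assms(1,2,4,5,6) that] .
  have "(\<alpha>, (\<lambda>u. if u \<in> X then e else \<alpha> u)) \<in> (mv V E C)\<^sup>*" if "X \<subseteq> S" for X
    using finite_subset[OF that assms(3)] that
  proof (induction X rule: finite_induct)
    case empty then show ?case by simp
  next
    case (insert a F)
    have p1: "proper V E C (\<lambda>u. if u \<in> F then e else \<alpha> u)" using PS insert.prems by blast
    have p2: "proper V E C (\<lambda>u. if u \<in> insert a F then e else \<alpha> u)" using PS[OF insert.prems] .
    have "\<forall>u. u \<noteq> a \<longrightarrow> (if u \<in> F then e else \<alpha> u) = (if u \<in> insert a F then e else \<alpha> u)" by simp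
    moreover have "a \<in> V" using insert.prems assms(2) by blast
    ultimately have "((\<lambda>u. if u \<in> F then e else \<alpha> u), (\<lambda>u. if u \<in> insert a F then e else \<alpha> u)) \<in> mv V E C"
      unfolding mv_def using p1 p2 by blast
    moreover have "(\<alpha>, (\<lambda>u. if u \<in> F then e else \<alpha> u)) \<in> (mv V E C)\<^sup>*" using insert by blast
    ultimately show ?case by (meson rtrancl.rtrancl_into_rtrancl)
  qed
  then show ?thesis by blast
qed


lemma goodD:
  assumes "good V E" "finite C" "colorable V E k" "k + 1 \<le> card C" "proper V E C \<alpha>" "proper V E C \<beta>"
    "\<forall>u. u \<notin> V \<longrightarrow> \<alpha> u = \<beta> u"
  shows "(\<alpha>,\<beta>) \<in> (mv V E C)\<^sup>*"
  using assms unfolding good_def by blast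

lemma card_minus2: "finite C \<Longrightarrow> card C - 2 \<le> card (C - {e, e'})"
proof -
  assume f: "finite C"
  have "card C - card {e,e'} \<le> card (C - {e,e'})" by (rule diff_card_le_card_Diff) simp
  moreover have "card {e,e'} \<le> 2" by (simp add: card_insert_if)
  ultimately show ?thesis by linarith
qed

lemma good_step:
  assumes fin: "finite V" and IH: "\<And>V'. V' \<subset> V \<Longrightarrow> good V' E" and U: "ucl V E"
  shows "good V E"
  unfolding good_def
proof (intro allI impI)
  fix C k \<alpha> \<beta>
  assume H: "finite C \<and> colorable V E k \<and> k + 1 \<le> card C \<and> proper V E C \<alpha> \<and> proper V E C \<beta> \<and> (\<forall>u. u \<notin> V \<longrightarrow> \<alpha> u = \<beta> u)"
  then have fC: "finite C" and ck: "colorable V E k" and kC: "k+1 \<le> card C" and pa: "proper V E C \<alpha>"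
    and pb: "proper V E C \<beta>" and off: "\<forall>u. u\<notin>V \<longrightarrow> \<alpha> u = \<beta> u" by auto
  show "(\<alpha>,\<beta>) \<in> (mv V E C)\<^sup>*"
  proof (cases "V = {}")
    case True
    then have "\<alpha> = \<beta>" using off by auto
    then show ?thesis by simp
  next
    case False
    then obtain v0 where v0: "v0 \<in> V" by auto
    obtain C0 \<gamma> where g: "finite C0" "card C0 \<le> k" "proper V E C0 \<gamma>" using ck unfolding colorable_def by auto
    define S where "S = {u\<in>V. \<gamma> u = \<gamma> v0}"
    have SV: "S \<subseteq> V" and v0S: "v0 \<in> S" using v0 unfolding S_def by auto
    have finS: "finite S" using finite_subset[OF SV fin] .
    have indS: "\<forall>u\<in>S. \<forall>w\<in>S. {u,w} \<notin> E"
    proof (intro ballI notI)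
      fix u w assume "u \<in> S" "w \<in> S" "{u,w} \<in> E"
      then have "u \<in> V" "w \<in> V" "\<gamma> u = \<gamma> w" unfolding S_def by auto
      then show False using g(3) \<open>{u,w} \<in> E\<close> unfolding proper_def by blast
    qed
    have g0: "\<gamma> v0 \<in> C0" using g(3) v0 unfolding proper_def by auto
    have colR: "colorable (V - S) E (k - 1)"
    proof -
      have "proper (V - S) E (C0 - {\<gamma> v0}) \<gamma>" using g(3) unfolding proper_def S_def by auto
      moreover have "card (C0 - {\<gamma> v0}) \<le> k - 1" using g(1,2) g0 by (simp add: card_Diff_singleton)
      moreover have "finite (C0 - {\<gamma> v0})" using g(1) by simp
      ultimately show ?thesis unfolding colorable_def by blast
    qed
    have "card C0 > 0" using g(1) g0 card_gt_0_iff by blast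
    then have k1: "k \<ge> 1" using g(2) by linarith
    have goodR: "good (V - S) E" using IH v0S v0 by blast
    obtain \<alpha>1 e where a1: "(\<alpha>, \<alpha>1) \<in> (mv V E C)\<^sup>*" "e \<in> C" "\<forall>v\<in>V. \<alpha>1 v \<noteq> e"
      using U fC ck kC pa unfolding ucl_def by blast
    obtain \<beta>1 e' where b1: "(\<beta>, \<beta>1) \<in> (mv V E C)\<^sup>*" "e' \<in> C" "\<forall>v\<in>V. \<beta>1 v \<noteq> e'"
      using U fC ck kC pb unfolding ucl_def by blast
    have pa1: "proper V E C \<alpha>1" using conn_proper a1(1) pa .
    have pb1: "proper V E C \<beta>1" using conn_proper b1(1) pb .
    define \<alpha>2 where "\<alpha>2 = (\<lambda>u. if u \<in> S then e else \<alpha>1 u)"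
    have a12: "(\<alpha>1, \<alpha>2) \<in> (mv V E C)\<^sup>*" unfolding \<alpha>2_def
      using recol_set[OF pa1 SV finS indS a1(2)] a1(3) by blast
    have pa2: "proper V E C \<alpha>2" using conn_proper a12 pa1 .
    define \<beta>2 where "\<beta>2 = (\<lambda>u. if u \<in> S then e' else \<beta>1 u)"
    have b12: "(\<beta>1, \<beta>2) \<in> (mv V E C)\<^sup>*" unfolding \<beta>2_def
      using recol_set[OF pb1 SV finS indS b1(2)] b1(3) by blast
    have pb2: "proper V E C \<beta>2" using conn_proper b12 pb1 .
    have "k - 1 \<le> card (C - {e, e'})" using card_minus2[OF fC, of e e'] kC by linarith
    then obtain \<rho> where rho: "proper (V - S) E (C - {e, e'}) \<rho>"
      using col_exists[OF colR] fC by auto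
    define \<alpha>3 where "\<alpha>3 = (\<lambda>u. if u \<in> V - S then \<rho> u else \<alpha>2 u)"
    define \<beta>3 where "\<beta>3 = (\<lambda>u. if u \<in> V - S then \<rho> u else \<beta>2 u)"
    have cardCe: "card (C - {x}) = card C - 1" if "x \<in> C" for x using that fC by (simp add: card_Diff_singleton)
    have a23: "(\<alpha>2, \<alpha>3) \<in> (mv V E C)\<^sup>*"
    proof -
      have p2: "proper (V - S) E (C - {e}) \<alpha>2" using pa1 a1(3) unfolding proper_def \<alpha>2_def by auto
      have p3: "proper (V - S) E (C - {e}) \<alpha>3" using rho unfolding proper_def \<alpha>3_def by auto
      have "(\<alpha>2, \<alpha>3) \<in> (mv (V - S) E (C - {e}))\<^sup>*"
      proof (rule goodD[OF goodR _ colR _ p2 p3])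
        show "finite (C - {e})" using fC by simp
        show "k - 1 + 1 \<le> card (C - {e})" using k1 kC cardCe[OF a1(2)] by simp
        show "\<forall>u. u \<notin> V - S \<longrightarrow> \<alpha>2 u = \<alpha>3 u" unfolding \<alpha>3_def by simp
      qed
      moreover have "\<forall>u\<in>V-S. \<forall>w\<in>V-(V-S). {u,w} \<in> E \<longrightarrow> \<alpha>2 w \<notin> C - {e}" unfolding \<alpha>2_def by auto
      ultimately show ?thesis using lift[of \<alpha>2 \<alpha>3 "V - S" E "C - {e}" V C] pa2 by blast
    qed
    have b23: "(\<beta>2, \<beta>3) \<in> (mv V E C)\<^sup>*"
    proof -
      have p2: "proper (V - S) E (C - {e'}) \<beta>2" using pb1 b1(3) unfolding proper_def \<beta>2_def by auto
      have p3: "proper (V - S) E (C - {e'}) \<beta>3" using rho unfolding proper_def \<beta>3_def by auto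
      have "(\<beta>2, \<beta>3) \<in> (mv (V - S) E (C - {e'}))\<^sup>*"
      proof (rule goodD[OF goodR _ colR _ p2 p3])
        show "finite (C - {e'})" using fC by simp
        show "k - 1 + 1 \<le> card (C - {e'})" using k1 kC cardCe[OF b1(2)] by simp
        show "\<forall>u. u \<notin> V - S \<longrightarrow> \<beta>2 u = \<beta>3 u" unfolding \<beta>3_def by simp
      qed
      moreover have "\<forall>u\<in>V-S. \<forall>w\<in>V-(V-S). {u,w} \<in> E \<longrightarrow> \<beta>2 w \<notin> C - {e'}" unfolding \<beta>2_def by auto
      ultimately show ?thesis using lift[of \<beta>2 \<beta>3 "V - S" E "C - {e'}" V C] pb2 by blast
    qed
    have pa3: "proper V E C \<alpha>3" using conn_proper a23 pa2 .
    define \<alpha>4 where "\<alpha>4 = (\<lambda>u. if u \<in> S then e' else \<alpha>3 u)"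
    have a34: "(\<alpha>3, \<alpha>4) \<in> (mv V E C)\<^sup>*" unfolding \<alpha>4_def
    proof (rule recol_set[OF pa3 SV finS indS b1(2)])
      show "\<forall>v\<in>V - S. \<alpha>3 v \<noteq> e'" using rho unfolding \<alpha>3_def proper_def by auto
    qed
    have eq: "\<alpha>4 = \<beta>3"
    proof
      fix u
      show "\<alpha>4 u = \<beta>3 u"
      proof (cases "u \<in> V")
        case True
        then show ?thesis unfolding \<alpha>4_def \<beta>3_def \<alpha>3_def \<beta>2_def by auto
      next
        case False
        then have "\<alpha> u = \<alpha>1 u" "\<beta> u = \<beta>1 u" using conn_off a1(1) b1(1) by metis+
        then show ?thesis using False off SV unfolding \<alpha>4_def \<beta>3_def \<alpha>3_def \<beta>2_def \<alpha>2_def by auto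
      qed
    qed
    have "(\<alpha>, \<alpha>4) \<in> (mv V E C)\<^sup>*" using a1(1) a12 a23 a34 by (meson rtrancl_trans)
    moreover have "(\<beta>, \<beta>3) \<in> (mv V E C)\<^sup>*" using b1(1) b12 b23 by (meson rtrancl_trans)
    ultimately show ?thesis using eq conn_sym by (metis rtrancl_trans)
  qed
qed


lemma conn_lift_part:
  assumes "(\<alpha>,\<beta>) \<in> (mv V' E C)\<^sup>*" "V' \<subseteq> V" "proper V E C \<alpha>"
    and "\<forall>u\<in>V'. \<forall>w\<in>V-V'. {u,w} \<notin> E"
  shows "(\<alpha>,\<beta>) \<in> (mv V E C)\<^sup>*"
  using lift[OF assms(1,2) order_refl assms(3)] assms(4) by blast

lemma ucl_anti:
  assumes AB: "A \<union> B = V" "A \<inter> B = {}" and anti: "\<forall>a\<in>A. \<forall>b\<in>B. {a,b} \<notin> E"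
    and gA: "good A E" and gB: "good B E"
  shows "ucl V E"
  unfolding ucl_def
proof (intro allI impI)
  fix C k \<alpha> assume H: "finite C \<and> colorable V E k \<and> k + 1 \<le> card C \<and> proper V E C \<alpha>"
  then have fC: "finite C" and ck: "colorable V E k" and kC: "k+1 \<le> card C" and pa: "proper V E C \<alpha>" by auto
  obtain C' where C': "C' \<subseteq> C" "card C' = k" "finite C'" using obtain_subset_with_card_n[of k C] kC by auto
  have cA: "colorable A E k" using colorable_mono ck AB(1) by blast
  have cB: "colorable B E k" using colorable_mono ck AB(1) by blast
  obtain \<rho>A where rA: "proper A E C' \<rho>A" using col_exists[OF cA C'(3)] C'(2) by auto
  obtain \<rho>B where rB: "proper B E C' \<rho>B" using col_exists[OF cB C'(3)] C'(2) by auto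
  define \<alpha>1 where "\<alpha>1 = (\<lambda>u. if u \<in> A then \<rho>A u else \<alpha> u)"
  define \<alpha>2 where "\<alpha>2 = (\<lambda>u. if u \<in> B then \<rho>B u else \<alpha>1 u)"
  have s1: "(\<alpha>, \<alpha>1) \<in> (mv A E C)\<^sup>*"
  proof (rule goodD[OF gA fC cA kC])
    show "proper A E C \<alpha>" using proper_mono[OF pa] AB(1) by blast
    show "proper A E C \<alpha>1" using rA C'(1) unfolding proper_def \<alpha>1_def by auto
    show "\<forall>u. u \<notin> A \<longrightarrow> \<alpha> u = \<alpha>1 u" unfolding \<alpha>1_def by simp
  qed
  have s1': "(\<alpha>, \<alpha>1) \<in> (mv V E C)\<^sup>*"
    by (rule conn_lift_part[OF s1 _ pa]) (use AB anti in auto)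
  have pa1: "proper V E C \<alpha>1" using conn_proper s1' pa .
  have s2: "(\<alpha>1, \<alpha>2) \<in> (mv B E C)\<^sup>*"
  proof (rule goodD[OF gB fC cB kC])
    show "proper B E C \<alpha>1" using proper_mono[OF pa1] AB(1) by blast
    show "proper B E C \<alpha>2" using rB C'(1) unfolding proper_def \<alpha>2_def by auto
    show "\<forall>u. u \<notin> B \<longrightarrow> \<alpha>1 u = \<alpha>2 u" unfolding \<alpha>2_def by simp
  qed
  have s2': "(\<alpha>1, \<alpha>2) \<in> (mv V E C)\<^sup>*"
  proof (rule conn_lift_part[OF s2 _ pa1])
    show "B \<subseteq> V" using AB by auto
    show "\<forall>u\<in>B. \<forall>w\<in>V - B. {u, w} \<notin> E"
    proof (intro ballI)
      fix u w assume "u \<in> B" "w \<in> V - B"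
      then have "w \<in> A" using AB by auto
      then show "{u,w} \<notin> E" using anti \<open>u \<in> B\<close> by (metis insert_commute)
    qed
  qed
  have "\<not> C \<subseteq> C'"
  proof
    assume "C \<subseteq> C'" then have "card C \<le> card C'" using card_mono C'(3) by blast
    then show False using C'(2) kC by linarith
  qed
  then obtain c where c: "c \<in> C" "c \<notin> C'" by auto
  have "\<forall>v\<in>V. \<alpha>2 v \<noteq> c"
  proof
    fix v assume "v \<in> V"
    then have "\<alpha>2 v \<in> C'" using rA rB AB unfolding proper_def \<alpha>2_def \<alpha>1_def by auto
    then show "\<alpha>2 v \<noteq> c" using c by auto
  qed
  then show "\<exists>\<beta>. (\<alpha>, \<beta>) \<in> (mv V E C)\<^sup>* \<and> (\<exists>c\<in>C. \<forall>v\<in>V. \<beta> v \<noteq> c)"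
    using s1' s2' c(1) by (meson rtrancl_trans)
qed

lemma ucl_comp_half:
  assumes AB: "A \<union> B = V" "A \<inter> B = {}" and dis: "\<alpha> ` A \<inter> \<alpha> ` B = {}"
    and gA: "good A E" and fC: "finite C" and pa: "proper V E C \<alpha>"
    and cA: "colorable A E kA" and kA: "kA + 1 \<le> card (\<alpha> ` A)"
  shows "\<exists>\<beta>. (\<alpha>, \<beta>) \<in> (mv V E C)\<^sup>* \<and> (\<exists>c\<in>C. \<forall>v\<in>V. \<beta> v \<noteq> c)"
proof -
  have CA: "\<alpha> ` A \<subseteq> C" using pa AB unfolding proper_def by auto
  then have fCA: "finite (\<alpha> ` A)" using fC finite_subset by blast
  obtain C' where C': "C' \<subseteq> \<alpha> ` A" "card C' = kA" "finite C'" using obtain_subset_with_card_n[of kA "\<alpha> ` A"] kA by auto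
  obtain \<rho> where r: "proper A E C' \<rho>" using col_exists[OF cA C'(3)] C'(2) by auto
  define \<alpha>1 where "\<alpha>1 = (\<lambda>u. if u \<in> A then \<rho> u else \<alpha> u)"
  have s1: "(\<alpha>, \<alpha>1) \<in> (mv A E (\<alpha> ` A))\<^sup>*"
  proof (rule goodD[OF gA fCA cA kA])
    show "proper A E (\<alpha> ` A) \<alpha>" using pa AB unfolding proper_def by auto
    show "proper A E (\<alpha> ` A) \<alpha>1" using r C'(1) unfolding proper_def \<alpha>1_def by auto
    show "\<forall>u. u \<notin> A \<longrightarrow> \<alpha> u = \<alpha>1 u" unfolding \<alpha>1_def by simp
  qed
  have s1': "(\<alpha>, \<alpha>1) \<in> (mv V E C)\<^sup>*"
  proof (rule lift[OF s1 _ CA pa])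
    show "A \<subseteq> V" using AB by auto
    show "\<forall>u\<in>A. \<forall>w\<in>V - A. {u, w} \<in> E \<longrightarrow> \<alpha> w \<notin> \<alpha> ` A"
      using dis AB by auto
  qed
  have "\<not> \<alpha> ` A \<subseteq> C'"
  proof
    assume "\<alpha> ` A \<subseteq> C'" then have "card (\<alpha> ` A) \<le> card C'" using card_mono C'(3) by blast
    then show False using C'(2) kA by linarith
  qed
  then obtain c where c: "c \<in> \<alpha> ` A" "c \<notin> C'" by auto
  have "\<forall>v\<in>V. \<alpha>1 v \<noteq> c"
  proof
    fix v assume v: "v \<in> V"
    show "\<alpha>1 v \<noteq> c"
    proof (cases "v \<in> A")
      case True
      then have "\<alpha>1 v \<in> C'" using r unfolding proper_def \<alpha>1_def by auto
      then show ?thesis using c by auto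
    next
      case False
      then have "v \<in> B" "\<alpha>1 v = \<alpha> v" using v AB unfolding \<alpha>1_def by auto
      then show ?thesis using c dis by auto
    qed
  qed
  then show ?thesis using s1' c(1) CA by blast
qed

lemma ucl_comp:
  assumes AB: "A \<union> B = V" "A \<inter> B = {}" and comp: "\<forall>a\<in>A. \<forall>b\<in>B. {a,b} \<in> E"
    and gA: "good A E" and gB: "good B E"
  shows "ucl V E"
  unfolding ucl_def
proof (intro allI impI)
  fix C k \<alpha> assume H: "finite C \<and> colorable V E k \<and> k + 1 \<le> card C \<and> proper V E C \<alpha>"
  then have fC: "finite C" and ck: "colorable V E k" and kC: "k+1 \<le> card C" and pa: "proper V E C \<alpha>" by auto
  show "\<exists>\<beta>. (\<alpha>, \<beta>) \<in> (mv V E C)\<^sup>* \<and> (\<exists>c\<in>C. \<forall>v\<in>V. \<beta> v \<noteq> c)"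
  proof (cases "\<exists>c\<in>C. \<forall>v\<in>V. \<alpha> v \<noteq> c")
    case True
    then show ?thesis by blast
  next
    case False
    then have "C \<subseteq> \<alpha> ` V" by auto
    moreover have "\<alpha> ` V \<subseteq> C" using pa unfolding proper_def by auto
    ultimately have CV: "C = \<alpha> ` A \<union> \<alpha> ` B" using AB by auto
    have dj: "f ` A \<inter> f ` B = {}" if "proper V E C' f" for f C'
    proof (rule ccontr)
      assume "f ` A \<inter> f ` B \<noteq> {}"
      then obtain a b where "a \<in> A" "b \<in> B" "f a = f b" by auto
      moreover have "{a,b} \<in> E" using comp \<open>a \<in> A\<close> \<open>b \<in> B\<close> by auto
      ultimately show False using that AB unfolding proper_def by blast
    qed
    obtain C0 \<gamma> where g: "finite C0" "card C0 \<le> k" "proper V E C0 \<gamma>" using ck unfolding colorable_def by auto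
    have gV: "\<gamma> ` A \<union> \<gamma> ` B \<subseteq> C0" using g(3) AB unfolding proper_def by auto
    have fgA: "finite (\<gamma> ` A)" "finite (\<gamma> ` B)" using gV g(1) finite_subset by auto
    have fa: "finite (\<alpha> ` A)" "finite (\<alpha> ` B)" using CV fC by (metis finite_Un)+
    have "card (\<gamma> ` A) + card (\<gamma> ` B) = card (\<gamma> ` A \<union> \<gamma> ` B)"
      using card_Un_disjoint[OF fgA dj[OF g(3)]] by simp
    also have "\<dots> \<le> card C0" using card_mono[OF g(1) gV] .
    finally have cg: "card (\<gamma> ` A) + card (\<gamma> ` B) \<le> k" using g(2) by linarith
    have "card (\<alpha> ` A) + card (\<alpha> ` B) = card C"
      using card_Un_disjoint[OF fa dj[OF pa]] CV by simp
    then have cases: "card (\<gamma> ` A) + 1 \<le> card (\<alpha> ` A) \<or> card (\<gamma> ` B) + 1 \<le> card (\<alpha> ` B)"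
      using cg kC by linarith
    have colA: "colorable A E (card (\<gamma> ` A))"
      unfolding colorable_def using fgA(1) g(3) AB unfolding proper_def by blast
    have colB: "colorable B E (card (\<gamma> ` B))"
      unfolding colorable_def using fgA(2) g(3) AB unfolding proper_def by blast
    show ?thesis
    proof (cases "card (\<gamma> ` A) + 1 \<le> card (\<alpha> ` A)")
      case True
      then show ?thesis using ucl_comp_half[OF AB dj[OF pa] gA fC pa colA] by blast
    next
      case False
      then have "card (\<gamma> ` B) + 1 \<le> card (\<alpha> ` B)" using cases by blast
      moreover have "B \<union> A = V" "B \<inter> A = {}" using AB by auto
      moreover have "\<alpha> ` B \<inter> \<alpha> ` A = {}" using dj[OF pa] by auto
      ultimately show ?thesis using ucl_comp_half[OF _ _ _ gB fC pa colB] by blast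
    qed
  qed
qed


definition ind3 :: "'a set \<Rightarrow> 'a set set \<Rightarrow> bool" where
  "ind3 V E \<longleftrightarrow> (\<forall>x\<in>V. \<forall>y\<in>V. \<forall>z\<in>V. x \<noteq> y \<and> y \<noteq> z \<and> x \<noteq> z \<longrightarrow> {x,y} \<in> E \<or> {y,z} \<in> E \<or> {x,z} \<in> E)"

lemma fib2:
  assumes "ind3 V E" "proper V E C f" "x \<in> V" "y \<in> V" "z \<in> V" "f x = f y" "f y = f z"
  shows "x = y \<or> y = z \<or> x = z"
  using assms unfolding ind3_def proper_def by metis

lemma count_fibres:
  assumes fin: "finite V" and tri: "\<And>x y z. x \<in> V \<Longrightarrow> y \<in> V \<Longrightarrow> z \<in> V \<Longrightarrow> f x = f y \<Longrightarrow> f y = f z \<Longrightarrow> x = y \<or> y = z \<or> x = z"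
  shows "card V + card {x\<in>V. \<forall>y\<in>V. f y = f x \<longrightarrow> y = x} = 2 * card (f ` V)"
proof -
  define S where "S = {x\<in>V. \<forall>y\<in>V. f y = f x \<longrightarrow> y = x}"
  define R where "R = V - S"
  have VSR: "V = S \<union> R" "S \<inter> R = {}" unfolding R_def S_def by auto
  have fS: "finite S" "finite R" using fin unfolding S_def R_def by auto
  have cV: "card V = card S + card R" using card_Un_disjoint[OF fS VSR(2)] VSR(1) by simp
  have injS: "inj_on f S" unfolding inj_on_def S_def by auto
  have dj: "f ` S \<inter> f ` R = {}"
  proof (rule ccontr)
    assume "f ` S \<inter> f ` R \<noteq> {}"
    then obtain a b where ab: "a \<in> S" "b \<in> R" "f a = f b" by blast
    then have "b = a" unfolding S_def R_def by auto
    then show False using ab unfolding R_def by auto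
  qed
  have cfV: "card (f ` V) = card S + card (f ` R)"
    using card_Un_disjoint[OF finite_imageI[OF fS(1)] finite_imageI[OF fS(2)] dj] VSR(1)
      card_image[OF injS] by (simp add: image_Un)
  define fib where "fib c = {x\<in>R. f x = c}" for c
  have fibc: "card (fib c) = 2" if "c \<in> f ` R" for c
  proof -
    have "\<exists>x0\<in>R. f x0 = c" using that by auto
    then obtain x0 where x0: "x0 \<in> R" "f x0 = c" by blast
    then obtain y where y: "y \<in> V" "f y = f x0" "y \<noteq> x0" unfolding R_def S_def by auto
    have yR: "y \<in> R" using y x0 unfolding R_def S_def by auto
    have "fib c = {x0, y}"
    proof
      show "fib c \<subseteq> {x0, y}"
      proof
        fix z assume "z \<in> fib c"
        then have "z \<in> V" "f z = c" unfolding fib_def R_def by auto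
        then have "x0 = y \<or> y = z \<or> x0 = z" using tri[of x0 y z] x0 y unfolding R_def by auto
        then show "z \<in> {x0, y}" using y by auto
      qed
      show "{x0, y} \<subseteq> fib c" using x0 y yR unfolding fib_def by auto
    qed
    then show ?thesis using y(3) by auto
  qed
  have "2 * card (fib ` f ` R) = card (\<Union> (fib ` f ` R))"
  proof (rule card_partition)
    show "finite (fib ` f ` R)" using fS by simp
    show "finite (\<Union> (fib ` f ` R))" using fS unfolding fib_def by auto
    show "\<And>c. c \<in> fib ` f ` R \<Longrightarrow> card c = 2" using fibc by auto
    show "\<And>c1 c2. c1 \<in> fib ` f ` R \<Longrightarrow> c2 \<in> fib ` f ` R \<Longrightarrow> c1 \<noteq> c2 \<Longrightarrow> c1 \<inter> c2 = {}"
      unfolding fib_def by auto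
  qed
  moreover have "\<Union> (fib ` f ` R) = R" unfolding fib_def by auto
  moreover have "card (fib ` f ` R) = card (f ` R)"
  proof (rule card_image)
    show "inj_on fib (f ` R)"
    proof (rule inj_onI)
      fix c d assume "c \<in> f ` R" "d \<in> f ` R" "fib c = fib d"
      then obtain x where "x \<in> R" "f x = c" by auto
      then have "x \<in> fib c" unfolding fib_def by auto
      then have "x \<in> fib d" using \<open>fib c = fib d\<close> by simp
      then show "c = d" using \<open>f x = c\<close> unfolding fib_def by auto
    qed
  qed
  ultimately have "card R = 2 * card (f ` R)" by simp
  then show ?thesis using cV cfV unfolding S_def by simp
qed

lemma ucl_3k1:
  assumes fin: "finite V" and i3: "ind3 V E"
  shows "ucl V E"
  unfolding ucl_def
proof (intro allI impI)
  fix C k \<alpha> assume H: "finite C \<and> colorable V E k \<and> k + 1 \<le> card C \<and> proper V E C \<alpha>"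
  then have fC: "finite C" and ck: "colorable V E k" and kC: "k+1 \<le> card C" and pa: "proper V E C \<alpha>" by auto
  obtain C0 \<gamma> where g: "finite C0" "card C0 \<le> k" "proper V E C0 \<gamma>" using ck unfolding colorable_def by auto
  define Q where "Q \<beta> = {(x,y). x\<in>V \<and> y\<in>V \<and> x\<noteq>y \<and> \<beta> x = \<beta> y \<and> \<gamma> x = \<gamma> y}" for \<beta> :: "'a \<Rightarrow> nat"
  define N where "N = card (V \<times> V)"
  have QV: "Q \<beta> \<subseteq> V \<times> V" for \<beta> unfolding Q_def by auto
  have fVV: "finite (V \<times> V)" using fin by simp
  have cgV: "card (\<gamma> ` V) \<le> k"
  proof -
    have "\<gamma> ` V \<subseteq> C0" using g(3) unfolding proper_def by auto
    then show ?thesis using card_mono[OF g(1)] g(2) by (meson le_trans)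
  qed
  have main: "\<forall>\<beta>. proper V E C \<beta> \<and> (\<alpha>,\<beta>) \<in> (mv V E C)\<^sup>* \<and> N - card (Q \<beta>) = m \<longrightarrow>
     (\<exists>\<beta>'. (\<alpha>,\<beta>') \<in> (mv V E C)\<^sup>* \<and> (\<exists>c\<in>C. \<forall>v\<in>V. \<beta>' v \<noteq> c))" for m
  proof (induction m rule: less_induct)
    case (less m)
    show ?case
    proof (intro allI impI)
      fix \<beta> assume Hb: "proper V E C \<beta> \<and> (\<alpha>,\<beta>) \<in> (mv V E C)\<^sup>* \<and> N - card (Q \<beta>) = m"
      then have pb: "proper V E C \<beta>" and cb: "(\<alpha>,\<beta>) \<in> (mv V E C)\<^sup>*" and mb: "N - card (Q \<beta>) = m" by auto
      show "\<exists>\<beta>'. (\<alpha>,\<beta>') \<in> (mv V E C)\<^sup>* \<and> (\<exists>c\<in>C. \<forall>v\<in>V. \<beta>' v \<noteq> c)"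
      proof (cases "\<exists>c\<in>C. \<forall>v\<in>V. \<beta> v \<noteq> c")
        case True
        then show ?thesis using cb by blast
      next
        case False
        then have "C \<subseteq> \<beta> ` V" by auto
        moreover have "\<beta> ` V \<subseteq> C" using pb unfolding proper_def by auto
        ultimately have bV: "\<beta> ` V = C" by auto
        have "\<exists>x\<in>V. (\<forall>y\<in>V. \<beta> y = \<beta> x \<longrightarrow> y = x) \<and> (\<exists>y\<in>V. y \<noteq> x \<and> \<gamma> y = \<gamma> x)"
        proof (rule ccontr)
          assume "\<not> ?thesis"
          then have sub: "{x\<in>V. \<forall>y\<in>V. \<beta> y = \<beta> x \<longrightarrow> y = x} \<subseteq> {x\<in>V. \<forall>y\<in>V. \<gamma> y = \<gamma> x \<longrightarrow> y = x}"
            by auto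
          have "card {x\<in>V. \<forall>y\<in>V. \<beta> y = \<beta> x \<longrightarrow> y = x} \<le> card {x\<in>V. \<forall>y\<in>V. \<gamma> y = \<gamma> x \<longrightarrow> y = x}"
            using card_mono[OF _ sub] fin by auto
          moreover have "card V + card {x\<in>V. \<forall>y\<in>V. \<beta> y = \<beta> x \<longrightarrow> y = x} = 2 * card (\<beta> ` V)"
            using count_fibres[OF fin] fib2[OF i3 pb] by blast
          moreover have "card V + card {x\<in>V. \<forall>y\<in>V. \<gamma> y = \<gamma> x \<longrightarrow> y = x} = 2 * card (\<gamma> ` V)"
            using count_fibres[OF fin] fib2[OF i3 g(3)] by blast
          ultimately have "card (\<beta> ` V) \<le> card (\<gamma> ` V)" by linarith
          then have "card C \<le> card (\<gamma> ` V)" using bV by simp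
          then show False using cgV kC by linarith
        qed
        then obtain x y where x: "x \<in> V" "\<forall>z\<in>V. \<beta> z = \<beta> x \<longrightarrow> z = x" and y: "y \<in> V" "y \<noteq> x" "\<gamma> y = \<gamma> x"
          by blast
        define \<beta>' where "\<beta>' = \<beta>(y := \<beta> x)"
        have "\<gamma> x \<noteq> \<gamma> y" if "{x,y} \<in> E" using g(3) x(1) y(1) that unfolding proper_def by blast
        then have nxy1: "{x,y} \<notin> E" using y(3) by auto
        then have nxy: "{x,y} \<notin> E" "{y,x} \<notin> E" by (simp_all add: insert_commute)
        have pb': "proper V E C \<beta>'"
          unfolding proper_def
        proof (intro conjI ballI impI)
          fix v assume "v \<in> V" then show "\<beta>' v \<in> C" using pb x(1) unfolding proper_def \<beta>'_def by auto
        next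
          fix u w assume uw: "u \<in> V" "w \<in> V" "{u,w} \<in> E"
          have bb: "\<beta> u \<noteq> \<beta> w" using pb uw unfolding proper_def by blast
          show "\<beta>' u \<noteq> \<beta>' w"
          proof (cases "u = y")
            case True
            then have "w \<noteq> y" using bb by auto
            then have "\<beta> w \<noteq> \<beta> x" using x(2) uw True nxy by auto
            then show ?thesis using True \<open>w \<noteq> y\<close> unfolding \<beta>'_def by auto
          next
            case False
            show ?thesis
            proof (cases "w = y")
              case True
              then have "\<beta> u \<noteq> \<beta> x" using x(2) uw False nxy by auto
              then show ?thesis using True False unfolding \<beta>'_def by auto
            next
              case False2: False
              then show ?thesis using False bb unfolding \<beta>'_def by auto
            qed
          qed
        qed
        have "\<forall>u. u \<noteq> y \<longrightarrow> \<beta> u = \<beta>' u" unfolding \<beta>'_def by simp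
        then have step: "(\<beta>, \<beta>') \<in> mv V E C" unfolding mv_def using pb pb' y(1) by blast
        have Qsub: "Q \<beta> \<subseteq> Q \<beta>'"
        proof
          fix p assume "p \<in> Q \<beta>"
          then obtain p1 p2 where p: "p = (p1,p2)" "p1 \<in> V" "p2 \<in> V" "p1 \<noteq> p2" "\<beta> p1 = \<beta> p2" "\<gamma> p1 = \<gamma> p2"
            unfolding Q_def by auto
          have ny: "p1 \<noteq> y \<and> p2 \<noteq> y"
          proof (rule ccontr)
            assume "\<not> (p1 \<noteq> y \<and> p2 \<noteq> y)"
            then have "p1 = y \<or> p2 = y" by blast
            then obtain q where q: "q \<in> V" "q \<noteq> y" "\<beta> q = \<beta> y" "\<gamma> q = \<gamma> y"
            proof
              assume "p1 = y" then show thesis using that[of p2] p(3-6) by simp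
            next
              assume "p2 = y" then show thesis using that[of p1] p(2) p(4-6) by simp
            qed
            have "q = x"
            proof (rule ccontr)
              assume "q \<noteq> x"
              have "\<gamma> x = \<gamma> y" using y(3) by simp
              moreover have "\<gamma> y = \<gamma> q" using q(4) by simp
              ultimately have "x = y \<or> y = q \<or> x = q" using fib2[OF i3 g(3) x(1) y(1) q(1)] by blast
              then show False using \<open>q \<noteq> x\<close> q(2) y(2) by blast
            qed
            then have "\<beta> y = \<beta> x" using q(3) by simp
            then have "y = x" using x(2) y(1) by blast
            then show False using y(2) by simp
          qed
          have "\<beta>' p1 = \<beta> p1" "\<beta>' p2 = \<beta> p2" using ny unfolding \<beta>'_def by auto
          then show "p \<in> Q \<beta>'" using p unfolding Q_def by auto
        qed
        have new: "(x,y) \<in> Q \<beta>' - Q \<beta>"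
        proof -
          have "\<beta> y \<noteq> \<beta> x" using x(2) y by auto
          then show ?thesis unfolding Q_def \<beta>'_def using x(1) y by auto
        qed
        have "card (Q \<beta>) < card (Q \<beta>')"
          using psubset_card_mono[OF finite_subset[OF QV fVV]] Qsub new by blast
        moreover have "card (Q \<beta>') \<le> N" unfolding N_def using card_mono[OF fVV QV] .
        ultimately have lt: "N - card (Q \<beta>') < m" using mb by linarith
        have c': "(\<alpha>, \<beta>') \<in> (mv V E C)\<^sup>*" using cb step by (meson rtrancl.rtrancl_into_rtrancl)
        show ?thesis using less.IH[OF lt, rule_format, of \<beta>'] pb' c' by blast
      qed
    qed
  qed
  show "\<exists>\<beta>. (\<alpha>, \<beta>) \<in> (mv V E C)\<^sup>* \<and> (\<exists>c\<in>C. \<forall>v\<in>V. \<beta> v \<noteq> c)"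
    using main[of "N - card (Q \<alpha>)", rule_format, of \<alpha>] pa by blast
qed


definition decomp :: "'a set \<Rightarrow> 'a set set \<Rightarrow> bool" where
  "decomp V E \<longleftrightarrow> (\<exists>A B. A \<union> B = V \<and> A \<inter> B = {} \<and> A \<noteq> {} \<and> B \<noteq> {} \<and>
      ((\<forall>a\<in>A. \<forall>b\<in>B. {a,b} \<notin> E) \<or> (\<forall>a\<in>A. \<forall>b\<in>B. {a,b} \<in> E)))"

lemma decompI_anti: "A \<union> B = V \<Longrightarrow> A \<inter> B = {} \<Longrightarrow> A \<noteq> {} \<Longrightarrow> B \<noteq> {} \<Longrightarrow> (\<forall>a\<in>A. \<forall>b\<in>B. {a,b} \<notin> E) \<Longrightarrow> decomp V E"
  unfolding decomp_def by blast

lemma decompI_comp: "A \<union> B = V \<Longrightarrow> A \<inter> B = {} \<Longrightarrow> A \<noteq> {} \<Longrightarrow> B \<noteq> {} \<Longrightarrow> (\<forall>a\<in>A. \<forall>b\<in>B. {a,b} \<in> E) \<Longrightarrow> decomp V E"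
  unfolding decomp_def by blast

lemma main_gen:
  assumes fin: "finite V"
    and Qh: "\<And>W W'. Q W \<Longrightarrow> W' \<subseteq> W \<Longrightarrow> Q W'"
    and dec: "\<And>W. Q W \<Longrightarrow> finite W \<Longrightarrow> ind3 W E \<or> decomp W E"
    and QV: "Q V"
  shows "good V E"
  using fin QV
proof (induction V rule: finite_psubset_induct)
  case (psubset V)
  have IH': "good V' E" if "V' \<subset> V" for V'
    using psubset.IH[OF that] Qh[OF psubset.prems] that by blast
  have "ucl V E"
  proof (cases "ind3 V E")
    case True
    then show ?thesis using ucl_3k1 psubset.hyps by blast
  next
    case False
    then have "decomp V E" using dec psubset by blast
    then obtain A B where AB: "A \<union> B = V" "A \<inter> B = {}" "A \<noteq> {}" "B \<noteq> {}"
      and ac: "(\<forall>a\<in>A. \<forall>b\<in>B. {a,b} \<notin> E) \<or> (\<forall>a\<in>A. \<forall>b\<in>B. {a,b} \<in> E)"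
      unfolding decomp_def by blast
    have "A \<subset> V" using AB by blast
    then have gA: "good A E" using IH' by blast
    have "B \<subset> V" using AB by blast
    then have gB: "good B E" using IH' by blast
    show ?thesis using ac ucl_anti[OF AB(1,2) _ gA gB] ucl_comp[OF AB(1,2) _ gA gB] by blast
  qed
  then show ?case using good_step[OF psubset.hyps IH'] by blast
qed

definition p4free :: "'a set \<Rightarrow> 'a set set \<Rightarrow> bool" where
  "p4free V E \<longleftrightarrow> \<not> (\<exists>a\<in>V. \<exists>b\<in>V. \<exists>c\<in>V. \<exists>d\<in>V. {a,b} \<in> E \<and> {b,c} \<in> E \<and> {c,d} \<in> E \<and>
      {a,c} \<notin> E \<and> {a,d} \<notin> E \<and> {b,d} \<notin> E)"

lemma p4free_mono: "p4free V E \<Longrightarrow> W \<subseteq> V \<Longrightarrow> p4free W E"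
  unfolding p4free_def by blast

lemma half_anti:
  assumes p4: "p4free (insert v W) E" and AB: "A \<union> B = W" "A \<inter> B = {}" "B \<noteq> {}"
    and anti: "\<forall>a\<in>A. \<forall>b\<in>B. {a,b} \<notin> E" and v: "v \<notin> W"
    and b0: "b0 \<in> B" "{v,b0} \<in> E" and y: "y \<in> A" "{v,y} \<notin> E"
  shows "decomp (insert v W) E"
proof (cases "\<exists>x\<in>A. \<exists>y'\<in>A. {v,x} \<in> E \<and> {v,y'} \<notin> E \<and> {x,y'} \<in> E")
  case True
  then obtain x y' where xy: "x \<in> A" "y' \<in> A" "{v,x} \<in> E" "{v,y'} \<notin> E" "{x,y'} \<in> E" by blast
  have "{y',x} \<in> E" "{x,v} \<in> E" "{y',v} \<notin> E" using xy by (simp_all add: insert_commute)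
  moreover have "{y',b0} \<notin> E" "{x,b0} \<notin> E" using anti xy b0 by auto
  moreover have "y' \<in> insert v W" "x \<in> insert v W" "v \<in> insert v W" "b0 \<in> insert v W" using xy b0 AB by auto
  ultimately have False using p4 b0(2) unfolding p4free_def by blast
  then show ?thesis ..
next
  case False
  define A2 where "A2 = {u\<in>A. {v,u} \<notin> E}"
  show ?thesis
  proof (rule decompI_anti[of A2 "insert v W - A2"])
    show "A2 \<union> (insert v W - A2) = insert v W" using AB unfolding A2_def by auto
    show "A2 \<inter> (insert v W - A2) = {}" by auto
    show "A2 \<noteq> {}" using y unfolding A2_def by auto
    show "insert v W - A2 \<noteq> {}" using v AB unfolding A2_def by auto
    show "\<forall>a\<in>A2. \<forall>b\<in>insert v W - A2. {a, b} \<notin> E"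
    proof (intro ballI)
      fix a b assume a: "a \<in> A2" and b: "b \<in> insert v W - A2"
      show "{a,b} \<notin> E"
      proof (cases "b = v")
        case True
        then show ?thesis using a unfolding A2_def by (auto simp: insert_commute)
      next
        case bv: False
        show ?thesis
        proof (cases "b \<in> B")
          case True
          then show ?thesis using a anti unfolding A2_def by auto
        next
          case False
          then have "b \<in> A" "{v,b} \<in> E" using b bv AB unfolding A2_def by auto
          moreover have "a \<in> A" "{v,a} \<notin> E" using a unfolding A2_def by auto
          ultimately have "{b,a} \<notin> E" using \<open>\<not> (\<exists>x\<in>A. \<exists>y'\<in>A. {v,x} \<in> E \<and> {v,y'} \<notin> E \<and> {x,y'} \<in> E)\<close> by blast
          then show ?thesis by (simp add: insert_commute)
        qed
      qed
    qed
  qed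
qed

lemma ext_anti:
  assumes p4: "p4free (insert v W) E" and AB: "A \<union> B = W" "A \<inter> B = {}" "A \<noteq> {}" "B \<noteq> {}"
    and anti: "\<forall>a\<in>A. \<forall>b\<in>B. {a,b} \<notin> E" and v: "v \<notin> W"
  shows "decomp (insert v W) E"
proof (cases "\<forall>a\<in>A. {v,a} \<notin> E")
  case True
  show ?thesis
  proof (rule decompI_anti[of A "insert v B"])
    show "A \<union> insert v B = insert v W" using AB by auto
    show "A \<inter> insert v B = {}" using AB v by auto
    show "\<forall>a\<in>A. \<forall>b\<in>insert v B. {a, b} \<notin> E" using True anti by (auto simp: insert_commute)
  qed (use AB in auto)
next
  case F1: False
  show ?thesis
  proof (cases "\<forall>b\<in>B. {v,b} \<notin> E")
    case True
    show ?thesis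
    proof (rule decompI_anti[of "insert v A" B])
      show "insert v A \<union> B = insert v W" using AB by auto
      show "insert v A \<inter> B = {}" using AB v by auto
      show "\<forall>a\<in>insert v A. \<forall>b\<in>B. {a, b} \<notin> E" using True anti by auto
    qed (use AB in auto)
  next
    case F2: False
    then obtain b0 where b0: "b0 \<in> B" "{v,b0} \<in> E" by blast
    obtain a0 where a0: "a0 \<in> A" "{v,a0} \<in> E" using F1 by blast
    show ?thesis
    proof (cases "\<forall>u\<in>W. {v,u} \<in> E")
      case True
      show ?thesis
      proof (rule decompI_comp[of "{v}" W])
        show "\<forall>a\<in>{v}. \<forall>b\<in>W. {a, b} \<in> E" using True by auto
      qed (use AB v in auto)
    next
      case False
      then obtain y where y: "y \<in> W" "{v,y} \<notin> E" by blast
      show ?thesis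
      proof (cases "y \<in> A")
        case True
        then show ?thesis using half_anti[OF p4 AB(1,2,4) anti v b0 True y(2)] by blast
      next
        case False
        then have "y \<in> B" using y AB by auto
        moreover have "B \<union> A = W" "B \<inter> A = {}" using AB by auto
        moreover have "\<forall>a\<in>B. \<forall>b\<in>A. {a,b} \<notin> E"
        proof (intro ballI)
          fix a b assume "a \<in> B" "b \<in> A" then have "{b,a} \<notin> E" using anti by blast
          then show "{a,b} \<notin> E" by (simp add: insert_commute)
        qed
        ultimately show ?thesis using half_anti[OF p4 _ _ AB(3) _ v a0] y(2) by blast
      qed
    qed
  qed
qed

lemma half_comp:
  assumes p4: "p4free (insert v W) E" and AB: "A \<union> B = W" "A \<inter> B = {}"
    and comp: "\<forall>a\<in>A. \<forall>b\<in>B. {a,b} \<in> E" and v: "v \<notin> W"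
    and b0: "b0 \<in> B" "{v,b0} \<notin> E" and x: "x \<in> A" "{v,x} \<in> E"
  shows "decomp (insert v W) E"
proof (cases "\<exists>x'\<in>A. \<exists>y\<in>A. {v,x'} \<in> E \<and> {v,y} \<notin> E \<and> {x',y} \<notin> E")
  case True
  then obtain x' y where xy: "x' \<in> A" "y \<in> A" "{v,x'} \<in> E" "{v,y} \<notin> E" "{x',y} \<notin> E" by blast
  have "{x',b0} \<in> E" "{b0,y} \<in> E" using comp xy b0 by (auto simp: insert_commute)
  moreover have "x' \<in> insert v W" "y \<in> insert v W" "v \<in> insert v W" "b0 \<in> insert v W" using xy b0 AB by auto
  ultimately have False using p4 b0(2) xy unfolding p4free_def by blast
  then show ?thesis ..
next
  case False
  define A1 where "A1 = {u\<in>A. {v,u} \<in> E}"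
  show ?thesis
  proof (rule decompI_comp[of A1 "insert v W - A1"])
    show "A1 \<union> (insert v W - A1) = insert v W" using AB unfolding A1_def by auto
    show "A1 \<inter> (insert v W - A1) = {}" by auto
    show "A1 \<noteq> {}" using x unfolding A1_def by auto
    show "insert v W - A1 \<noteq> {}" using v AB unfolding A1_def by auto
    show "\<forall>a\<in>A1. \<forall>b\<in>insert v W - A1. {a, b} \<in> E"
    proof (intro ballI)
      fix a b assume a: "a \<in> A1" and b: "b \<in> insert v W - A1"
      show "{a,b} \<in> E"
      proof (cases "b = v")
        case True
        then show ?thesis using a unfolding A1_def by (auto simp: insert_commute)
      next
        case bv: False
        show ?thesis
        proof (cases "b \<in> B")
          case True
          then show ?thesis using a comp unfolding A1_def by auto
        next
          case False
          then have "b \<in> A" "{v,b} \<notin> E" using b bv AB unfolding A1_def by auto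
          moreover have "a \<in> A" "{v,a} \<in> E" using a unfolding A1_def by auto
          ultimately show "{a,b} \<in> E" using \<open>\<not> (\<exists>x'\<in>A. \<exists>y\<in>A. {v,x'} \<in> E \<and> {v,y} \<notin> E \<and> {x',y} \<notin> E)\<close> by blast
        qed
      qed
    qed
  qed
qed

lemma ext_comp:
  assumes p4: "p4free (insert v W) E" and AB: "A \<union> B = W" "A \<inter> B = {}" "A \<noteq> {}" "B \<noteq> {}"
    and comp: "\<forall>a\<in>A. \<forall>b\<in>B. {a,b} \<in> E" and v: "v \<notin> W"
  shows "decomp (insert v W) E"
proof (cases "\<forall>a\<in>A. {v,a} \<in> E")
  case True
  show ?thesis
  proof (rule decompI_comp[of A "insert v B"])
    show "A \<union> insert v B = insert v W" using AB by auto
    show "A \<inter> insert v B = {}" using AB v by auto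
    show "\<forall>a\<in>A. \<forall>b\<in>insert v B. {a, b} \<in> E" using True comp by (auto simp: insert_commute)
  qed (use AB in auto)
next
  case F1: False
  show ?thesis
  proof (cases "\<forall>b\<in>B. {v,b} \<in> E")
    case True
    show ?thesis
    proof (rule decompI_comp[of "insert v A" B])
      show "insert v A \<union> B = insert v W" using AB by auto
      show "insert v A \<inter> B = {}" using AB v by auto
      show "\<forall>a\<in>insert v A. \<forall>b\<in>B. {a, b} \<in> E" using True comp by auto
    qed (use AB in auto)
  next
    case F2: False
    then obtain b0 where b0: "b0 \<in> B" "{v,b0} \<notin> E" by blast
    obtain a0 where a0: "a0 \<in> A" "{v,a0} \<notin> E" using F1 by blast
    show ?thesis
    proof (cases "\<forall>u\<in>W. {v,u} \<notin> E")
      case True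
      show ?thesis
      proof (rule decompI_anti[of "{v}" W])
        show "\<forall>a\<in>{v}. \<forall>b\<in>W. {a, b} \<notin> E" using True by auto
      qed (use AB v in auto)
    next
      case False
      then obtain x where x: "x \<in> W" "{v,x} \<in> E" by blast
      show ?thesis
      proof (cases "x \<in> A")
        case True
        then show ?thesis using half_comp[OF p4 AB(1,2) comp v b0 True x(2)] by blast
      next
        case False
        then have "x \<in> B" using x AB by auto
        moreover have "B \<union> A = W" "B \<inter> A = {}" using AB by auto
        moreover have "\<forall>a\<in>B. \<forall>b\<in>A. {a,b} \<in> E"
        proof (intro ballI)
          fix a b assume "a \<in> B" "b \<in> A" then have "{b,a} \<in> E" using comp by blast
          then show "{a,b} \<in> E" by (simp add: insert_commute)
        qed
        ultimately show ?thesis using half_comp[OF p4 _ _ _ v a0] x(2) by blast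
      qed
    qed
  qed
qed

lemma p4_decomp:
  assumes "finite V" "p4free V E" "2 \<le> card V"
  shows "decomp V E"
  using assms
proof (induction V rule: finite_induct)
  case empty then show ?case by simp
next
  case (insert v W)
  have pW: "p4free W E" using p4free_mono insert.prems(1) by blast
  show ?case
  proof (cases "2 \<le> card W")
    case True
    then have "decomp W E" using insert.IH pW by blast
    then obtain A B where AB: "A \<union> B = W" "A \<inter> B = {}" "A \<noteq> {}" "B \<noteq> {}"
      and ac: "(\<forall>a\<in>A. \<forall>b\<in>B. {a,b} \<notin> E) \<or> (\<forall>a\<in>A. \<forall>b\<in>B. {a,b} \<in> E)"
      unfolding decomp_def by blast
    then show ?thesis using ext_anti[OF insert.prems(1) AB _ insert.hyps(2)]
        ext_comp[OF insert.prems(1) AB _ insert.hyps(2)] by blast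
  next
    case False
    then have "card W = 1" using insert by simp
    then obtain w where w: "W = {w}" using card_1_singletonE by blast
    then have vw: "v \<noteq> w" using insert.hyps(2) by auto
    show ?thesis
    proof (cases "{v,w} \<in> E")
      case True
      show ?thesis by (rule decompI_comp[of "{v}" "{w}"]) (use w vw True in auto)
    next
      case False
      show ?thesis by (rule decompI_anti[of "{v}" "{w}"]) (use w vw False in auto)
    qed
  qed
qed

lemma small_ind3:
  assumes "finite V" "card V \<le> 2" shows "ind3 V E"
  unfolding ind3_def
proof (intro ballI impI)
  fix x y z assume "x \<in> V" "y \<in> V" "z \<in> V" "x \<noteq> y \<and> y \<noteq> z \<and> x \<noteq> z"
  then have "{x,y,z} \<subseteq> V" "card {x,y,z} = 3" by auto
  then have "3 \<le> card V" using card_mono[OF assms(1)] by metis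
  then show "{x, y} \<in> E \<or> {y, z} \<in> E \<or> {x, z} \<in> E" using assms(2) by simp
qed

lemma p4_good:
  assumes "finite V" "p4free V E" shows "good V E"
proof (rule main_gen[where Q = "\<lambda>W. p4free W E"])
  show "\<And>W W'. p4free W E \<Longrightarrow> W' \<subseteq> W \<Longrightarrow> p4free W' E" using p4free_mono by blast
  show "\<And>W. p4free W E \<Longrightarrow> finite W \<Longrightarrow> ind3 W E \<or> decomp W E"
  proof -
    fix W assume "p4free W E" "finite W"
    then show "ind3 W E \<or> decomp W E"
      using p4_decomp small_ind3 by (metis not_le less_imp_le_nat Suc_1 Suc_leI)
  qed
qed (use assms in auto)


definition p31free :: "'a set \<Rightarrow> 'a set set \<Rightarrow> bool" where
  "p31free V E \<longleftrightarrow> \<not> (\<exists>a\<in>V. \<exists>b\<in>V. \<exists>c\<in>V. \<exists>d\<in>V. a \<noteq> c \<and> {a,b} \<in> E \<and> {b,c} \<in> E \<and> {a,c} \<notin> E \<and>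
      {d,a} \<notin> E \<and> {d,b} \<notin> E \<and> {d,c} \<notin> E)"

definition p3free :: "'a set \<Rightarrow> 'a set set \<Rightarrow> bool" where
  "p3free K E \<longleftrightarrow> (\<forall>x\<in>K. \<forall>y\<in>K. \<forall>z\<in>K. x \<noteq> z \<and> {x,y} \<in> E \<and> {y,z} \<in> E \<longrightarrow> {x,z} \<in> E)"

lemma p31free_mono: "p31free V E \<Longrightarrow> W \<subseteq> V \<Longrightarrow> p31free W E"
  unfolding p31free_def by blast

lemma p3D: "p3free K E \<Longrightarrow> x \<in> K \<Longrightarrow> y \<in> K \<Longrightarrow> z \<in> K \<Longrightarrow> x \<noteq> z \<Longrightarrow> {x,y} \<in> E \<Longrightarrow> {y,z} \<in> E \<Longrightarrow> {x,z} \<in> E"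
  unfolding p3free_def by blast

lemma p31D: "p31free V E \<Longrightarrow> a \<in> V \<Longrightarrow> b \<in> V \<Longrightarrow> c \<in> V \<Longrightarrow> d \<in> V \<Longrightarrow> a \<noteq> c \<Longrightarrow> {a,b} \<in> E \<Longrightarrow> {b,c} \<in> E
   \<Longrightarrow> {a,c} \<notin> E \<Longrightarrow> {d,a} \<notin> E \<Longrightarrow> {d,b} \<notin> E \<Longrightarrow> {d,c} \<notin> E \<Longrightarrow> False"
  unfolding p31free_def by blast

lemma p3_split:
  assumes p3: "p3free V E" and x: "x \<in> V" and y: "y \<in> V" "x \<noteq> y" "{x,y} \<notin> E"
  shows "decomp V E"
proof -
  define A where "A = {u\<in>V. u = x \<or> {x,u} \<in> E}"
  show ?thesis
  proof (rule decompI_anti[of A "V - A"])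
    show "A \<union> (V - A) = V" unfolding A_def by auto
    show "A \<inter> (V - A) = {}" by auto
    show "A \<noteq> {}" using x unfolding A_def by auto
    show "V - A \<noteq> {}" using y unfolding A_def by auto
    show "\<forall>a\<in>A. \<forall>b\<in>V - A. {a, b} \<notin> E"
    proof (intro ballI notI)
      fix a b assume a: "a \<in> A" and b: "b \<in> V - A" and ab: "{a,b} \<in> E"
      have bx: "b \<noteq> x" "{x,b} \<notin> E" using b unfolding A_def by auto
      show False
      proof (cases "a = x")
        case True
        then show False using ab bx by simp
      next
        case False
        then have "{x,a} \<in> E" "a \<in> V" using a unfolding A_def by auto
        then have "{x,b} \<in> E" using p3D[OF p3 x _ _ bx(1)[symmetric]] ab b by blast
        then show False using bx by simp
      qed
    qed
  qed
qed

lemma caseII: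
  assumes p31: "p31free V E" and KV: "K \<subseteq> V" and p3: "p3free K E"
    and t: "x0 \<in> K" "y0 \<in> K" "z0 \<in> K" "x0 \<noteq> y0" "y0 \<noteq> z0" "x0 \<noteq> z0"
      "{x0,y0} \<notin> E" "{y0,z0} \<notin> E" "{x0,z0} \<notin> E"
    and w: "w \<in> V" "w \<notin> K" and yz: "y \<in> K" "z \<in> K" "{w,y} \<in> E" "{y,z} \<in> E" "{w,z} \<notin> E"
    and lf: "\<forall>u. {u,u} \<notin> E"
  shows False
proof -
  have yzne: "y \<noteq> z" using yz(4) lf by auto
  have wz: "w \<noteq> z" using w yz by auto
  have C1: "{w,u} \<in> E" if u: "u \<in> K" "u \<noteq> y" "{u,y} \<notin> E" for u
  proof (rule ccontr)
    assume nwu: "{w,u} \<notin> E"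
    have "{u,z} \<notin> E"
    proof
      assume "{u,z} \<in> E"
      then have "{u,y} \<in> E" using p3D[OF p3 u(1) yz(2) yz(1) u(2)] yz(4) by (simp add: insert_commute)
      then show False using u by simp
    qed
    moreover have "{z,y} \<in> E" "{y,w} \<in> E" "{z,w} \<notin> E" "{u,w} \<notin> E" using yz nwu by (simp_all add: insert_commute)
    ultimately show False using p31D[OF p31, of z y w u] KV u yz w wz by blast
  qed
  define Ny where "Ny = {u. u = y \<or> {u,y} \<in> E}"
  have two: False if "p \<in> K" "q \<in> K" "p \<noteq> q" "{p,q} \<notin> E" "p \<in> Ny" "q \<in> Ny" for p q
  proof (cases "p = y")
    case True
    then have "{q,y} \<in> E" using that unfolding Ny_def by auto
    then show False using True that by (simp add: insert_commute)
  next
    case False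
    show False
    proof (cases "q = y")
      case True
      then have "{p,y} \<in> E" using that unfolding Ny_def by auto
      then show False using True that by simp
    next
      case False2: False
      then have "{p,y} \<in> E" "{y,q} \<in> E" using that False unfolding Ny_def by (auto simp: insert_commute)
      then have "{p,q} \<in> E" using p3D[OF p3 that(1) yz(1) that(2) that(3)] by blast
      then show False using that by simp
    qed
  qed
  obtain p q where pq: "p \<in> K" "q \<in> K" "p \<noteq> q" "{p,q} \<notin> E" "p \<notin> Ny" "q \<notin> Ny"
  proof (cases "x0 \<in> Ny")
    case True
    then have "y0 \<notin> Ny" "z0 \<notin> Ny" using two t by (metis insert_commute)+
    then show thesis using that[of y0 z0] t by blast
  next
    case F1: False
    show thesis
    proof (cases "y0 \<in> Ny")
      case True
      then have "z0 \<notin> Ny" using two t by (metis insert_commute)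
      then show thesis using that[of x0 z0] t F1 by blast
    next
      case False
      then show thesis using that[of x0 y0] t F1 by blast
    qed
  qed
  have "p \<noteq> y" "{p,y} \<notin> E" "q \<noteq> y" "{q,y} \<notin> E" using pq unfolding Ny_def by auto
  then have wp: "{w,p} \<in> E" "{w,q} \<in> E" using C1 pq by auto
  have nzp: "{z,p} \<notin> E" if "p \<in> K" "p \<noteq> y" "{p,y} \<notin> E" for p
  proof
    assume "{z,p} \<in> E"
    then have "{p,y} \<in> E" using p3D[OF p3 that(1) yz(2) yz(1) that(2)] yz(4) by (simp add: insert_commute)
    then show False using that by simp
  qed
  have "{z,p} \<notin> E" "{z,q} \<notin> E" using nzp pq \<open>p \<noteq> y\<close> \<open>{p,y} \<notin> E\<close> \<open>q \<noteq> y\<close> \<open>{q,y} \<notin> E\<close> by auto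
  moreover have "{p,w} \<in> E" "{z,w} \<notin> E" using wp yz by (simp_all add: insert_commute)
  ultimately show False using p31D[OF p31, of p w q z] KV pq w yz wp by blast
qed

lemma p31_decomp:
  assumes fin: "finite V" and p31: "p31free V E" and lf: "\<forall>u. {u,u} \<notin> E" and n3: "\<not> ind3 V E"
  shows "decomp V E"
proof (rule ccontr)
  assume nd: "\<not> decomp V E"
  obtain x0 y0 z0 where t: "x0 \<in> V" "y0 \<in> V" "z0 \<in> V" "x0 \<noteq> y0" "y0 \<noteq> z0" "x0 \<noteq> z0"
      "{x0,y0} \<notin> E" "{y0,z0} \<notin> E" "{x0,z0} \<notin> E"
    using n3 unfolding ind3_def by blast
  define P where "P K \<longleftrightarrow> K \<subseteq> V \<and> p3free K E \<and> x0 \<in> K \<and> y0 \<in> K \<and> z0 \<in> K" for K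
  have P0: "P {x0,y0,z0}"
  proof -
    have t': "{y0,x0} \<notin> E" "{z0,y0} \<notin> E" "{z0,x0} \<notin> E" using t by (simp_all add: insert_commute)
    have nE: "{a,b} \<notin> E" if "a \<in> {x0,y0,z0}" "b \<in> {x0,y0,z0}" for a b
      using that t t' lf by auto
    have "p3free {x0,y0,z0} E" unfolding p3free_def using nE by blast
    then show ?thesis unfolding P_def using t by auto
  qed
  have bnd: "\<forall>K. P K \<longrightarrow> card K < card V + 1"
  proof (intro allI impI)
    fix K assume "P K" then have "K \<subseteq> V" unfolding P_def by auto
    then have "card K \<le> card V" using card_mono[OF fin] by blast
    then show "card K < card V + 1" by simp
  qed
  obtain K where K: "P K" and Kmax: "\<forall>K'. P K' \<longrightarrow> card K' \<le> card K"
    using ex_has_greatest_nat[of P "{x0,y0,z0}" card "card V + 1"] P0 bnd by blast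
  have KV: "K \<subseteq> V" and p3: "p3free K E" and tK: "x0 \<in> K" "y0 \<in> K" "z0 \<in> K" using K unfolding P_def by auto
  show False
  proof (cases "K = V")
    case True
    then show False using p3_split[of V E x0 y0] p3 t nd by blast
  next
    case False
    have "\<not> (\<forall>a\<in>K. \<forall>b\<in>V - K. {a,b} \<in> E)"
    proof
      assume "\<forall>a\<in>K. \<forall>b\<in>V - K. {a,b} \<in> E"
      moreover have "K \<union> (V - K) = V" "K \<inter> (V - K) = {}" "K \<noteq> {}" "V - K \<noteq> {}" using KV False tK by auto
      ultimately show False using nd decompI_comp by blast
    qed
    then obtain k w where kw: "k \<in> K" "w \<in> V" "w \<notin> K" "{k,w} \<notin> E" by blast
    have CII: False if "y \<in> K" "z \<in> K" "{w,y} \<in> E" "{y,z} \<in> E" "{w,z} \<notin> E" for y z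
      using caseII[OF p31 KV p3 tK t(4-9) kw(2,3) that lf] .
    have "p3free (insert w K) E"
      unfolding p3free_def
    proof (intro ballI impI)
      fix x y z assume xyz: "x \<in> insert w K" "y \<in> insert w K" "z \<in> insert w K" "x \<noteq> z \<and> {x,y} \<in> E \<and> {y,z} \<in> E"
      then have xz: "x \<noteq> z" and xy: "{x,y} \<in> E" and yz: "{y,z} \<in> E" by auto
      have xny: "x \<noteq> y" using xy lf by auto
      have ynz: "y \<noteq> z" using yz lf by auto
      show "{x,z} \<in> E"
      proof (cases "x = w")
        case True
        then have "y \<in> K" "z \<in> K" using xyz xny xz by auto
        then show ?thesis using CII[of y z] True xy yz by blast
      next
        case xw: False
        show ?thesis
        proof (cases "z = w")
          case True
          then have "y \<in> K" "x \<in> K" using xyz ynz xz by auto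
          moreover have "{w,y} \<in> E" "{y,x} \<in> E" using True xy yz by (simp_all add: insert_commute)
          ultimately have "{w,x} \<in> E" using CII[of y x] by blast
          then show ?thesis using True by (simp add: insert_commute)
        next
          case zw: False
          show ?thesis
          proof (cases "y = w")
            case True
            have xK: "x \<in> K" "z \<in> K" using xyz xw zw by auto
            have wx: "{w,x} \<in> E" "{w,z} \<in> E" using True xy yz by (simp_all add: insert_commute)
            show ?thesis
            proof (rule ccontr)
              assume nxz: "{x,z} \<notin> E"
              have nkw: "{w,k} \<notin> E" using kw by (simp add: insert_commute)
              have "{x,k} \<notin> E" using CII[of x k] xK kw wx nkw by blast
              moreover have "{z,k} \<notin> E" using CII[of z k] xK kw wx nkw by blast
              ultimately show False
                using p31D[OF p31, of x w z k] xK KV kw xz wx nxz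
                by (simp add: insert_commute subsetD)
            qed
          next
            case False
            then have "x \<in> K" "y \<in> K" "z \<in> K" using xyz xw zw by auto
            then show ?thesis using p3D[OF p3] xz xy yz by blast
          qed
        qed
      qed
    qed
    then have "P (insert w K)" using K kw unfolding P_def by auto
    then have "card (insert w K) \<le> card K" using Kmax by blast
    moreover have "card (insert w K) = card K + 1"
      using kw(3) finite_subset[OF KV fin] by simp
    ultimately show False by simp
  qed
qed

lemma p31_good:
  assumes "finite V" "p31free V E" "\<forall>u. {u,u} \<notin> E" shows "good V E"
proof (rule main_gen[where Q = "\<lambda>W. p31free W E"])
  show "\<And>W W'. p31free W E \<Longrightarrow> W' \<subseteq> W \<Longrightarrow> p31free W' E" using p31free_mono by blast
  show "\<And>W. p31free W E \<Longrightarrow> finite W \<Longrightarrow> ind3 W E \<or> decomp W E"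
    using p31_decomp assms(3) by blast
qed (use assms in auto)


lemma simple_loopfree: "simple_graph V E \<Longrightarrow> \<forall>u. {u,u} \<notin> E"
  unfolding simple_graph_def by (metis doubleton_eq_iff)

lemma simple_edge_in: "simple_graph V E \<Longrightarrow> {u,v} \<in> E \<Longrightarrow> u \<in> V \<and> v \<in> V"
  unfolding simple_graph_def by (metis doubleton_eq_iff)

lemma colourings_iff:
  assumes "simple_graph V E"
  shows "\<alpha> \<in> colourings V E l \<longleftrightarrow> proper V E {1..l} \<alpha> \<and> (\<forall>v. v \<notin> V \<longrightarrow> \<alpha> v = 0)"
proof
  assume "\<alpha> \<in> colourings V E l"
  then show "proper V E {1..l} \<alpha> \<and> (\<forall>v. v \<notin> V \<longrightarrow> \<alpha> v = 0)"
    unfolding colourings_def proper_def by blast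
next
  assume a: "proper V E {1..l} \<alpha> \<and> (\<forall>v. v \<notin> V \<longrightarrow> \<alpha> v = 0)"
  have "\<alpha> u \<noteq> \<alpha> v" if "{u,v} \<in> E" for u v
    using simple_edge_in[OF assms that] a that unfolding proper_def by blast
  then show "\<alpha> \<in> colourings V E l" using a unfolding colourings_def proper_def by blast
qed

lemma mv_to_rec:
  assumes sg: "simple_graph V E" and c: "(\<alpha>,\<beta>) \<in> (mv V E {1..l})\<^sup>*" and a: "\<alpha> \<in> colourings V E l"
  shows "(\<alpha>,\<beta>) \<in> (recolour_rel V E l)\<^sup>*"
  using c
proof (induction rule: rtrancl_induct)
  case base then show ?case by simp
next
  case (step y z)
  have a0: "\<forall>v. v \<notin> V \<longrightarrow> \<alpha> v = 0" using a colourings_iff[OF sg] by blast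
  have yz0: "\<forall>v. v \<notin> V \<longrightarrow> y v = 0 \<and> z v = 0"
  proof (intro allI impI)
    fix v assume "v \<notin> V"
    moreover have "(\<alpha>, z) \<in> (mv V E {1..l})\<^sup>*" using step.hyps by (meson rtrancl.rtrancl_into_rtrancl)
    ultimately show "y v = 0 \<and> z v = 0" using conn_off step.hyps(1) a0 by metis
  qed
  obtain v0 where v0: "proper V E {1..l} y" "proper V E {1..l} z" "v0 \<in> V" "\<forall>u. u \<noteq> v0 \<longrightarrow> y u = z u"
    using step.hyps(2) unfolding mv_def by blast
  have yc: "y \<in> colourings V E l" and zc: "z \<in> colourings V E l" using colourings_iff[OF sg] v0 yz0 by blast+
  show ?case
  proof (cases "y = z")
    case True
    then show ?thesis using step.IH by simp
  next
    case False
    then have "y v0 \<noteq> z v0" using v0(4) by (metis ext)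
    then have "{v. y v \<noteq> z v} = {v0}" using v0(4) by blast
    then have "(y,z) \<in> recolour_rel V E l" unfolding recolour_rel_def using yc zc by simp
    then show ?thesis using step.IH by (meson rtrancl.rtrancl_into_rtrancl)
  qed
qed

lemma chrom_colorable:
  assumes sg: "simple_graph V E"
  shows "colorable V E (chromatic_number V E)"
proof -
  have fin: "finite V" using sg unfolding simple_graph_def by blast
  obtain h where h: "bij_betw h V {0..<card V}" using ex_bij_betw_finite_nat[OF fin] by blast
  define \<alpha> where "\<alpha> = (\<lambda>u. if u \<in> V then h u + 1 else 0)"
  have "proper V E {1..card V} \<alpha>"
    unfolding proper_def
  proof (intro conjI ballI impI)
    fix v assume v: "v \<in> V" then have "h v \<in> {0..<card V}" using h by (meson bij_betw_apply)
    then show "\<alpha> v \<in> {1..card V}" unfolding \<alpha>_def using v by auto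
  next
    fix u v assume uv: "u \<in> V" "v \<in> V" "{u,v} \<in> E"
    then have "u \<noteq> v" using simple_loopfree[OF sg] by auto
    then have "h u \<noteq> h v" using h uv unfolding bij_betw_def inj_on_def by blast
    then show "\<alpha> u \<noteq> \<alpha> v" using uv unfolding \<alpha>_def by simp
  qed
  then have "\<alpha> \<in> colourings V E (card V)" using colourings_iff[OF sg] unfolding \<alpha>_def by auto
  then have "colourings V E (card V) \<noteq> {}" by blast
  then have "colourings V E (chromatic_number V E) \<noteq> {}" unfolding chromatic_number_def by (rule LeastI)
  then obtain \<gamma> where "\<gamma> \<in> colourings V E (chromatic_number V E)" by blast
  then have "proper V E {1..chromatic_number V E} \<gamma>" using colourings_iff[OF sg] by blast
  then show ?thesis unfolding colorable_def by (metis card_atLeastAtMost diff_Suc_1 finite_atLeastAtMost order_refl)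
qed

lemma good_mixing:
  assumes sg: "simple_graph V E" and g: "good V E" and l: "chromatic_number V E + 1 \<le> l"
  shows "mixing V E l"
  unfolding mixing_def
proof (intro ballI)
  fix \<alpha> \<beta> assume a: "\<alpha> \<in> colourings V E l" and b: "\<beta> \<in> colourings V E l"
  then have pa: "proper V E {1..l} \<alpha>" "\<forall>v. v \<notin> V \<longrightarrow> \<alpha> v = 0"
    and pb: "proper V E {1..l} \<beta>" "\<forall>v. v \<notin> V \<longrightarrow> \<beta> v = 0" using colourings_iff[OF sg] by blast+
  have "(\<alpha>,\<beta>) \<in> (mv V E {1..l})\<^sup>*"
  proof (rule goodD[OF g _ chrom_colorable[OF sg] _ pa(1) pb(1)])
    show "finite {1..l}" by simp
    show "chromatic_number V E + 1 \<le> card {1..l}" using l by simp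
    show "\<forall>u. u \<notin> V \<longrightarrow> \<alpha> u = \<beta> u" using pa(2) pb(2) by simp
  qed
  then show "(\<alpha>,\<beta>) \<in> (recolour_rel V E l)\<^sup>*" using mv_to_rec[OF sg _ a] by blast
qed

lemma isub_trans:
  assumes "induced_subgraph A EA B EB" "induced_subgraph B EB C EC"
  shows "induced_subgraph A EA C EC"
proof -
  obtain f where f: "inj_on f A" "f ` A \<subseteq> B" "\<forall>u\<in>A. \<forall>v\<in>A. {u,v} \<in> EA \<longleftrightarrow> {f u, f v} \<in> EB"
    using assms(1) unfolding induced_subgraph_def by blast
  obtain g where g: "inj_on g B" "g ` B \<subseteq> C" "\<forall>u\<in>B. \<forall>v\<in>B. {u,v} \<in> EB \<longleftrightarrow> {g u, g v} \<in> EC"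
    using assms(2) unfolding induced_subgraph_def by blast
  have "inj_on (g \<circ> f) A" using f g by (meson comp_inj_on inj_on_subset)
  moreover have "(g \<circ> f) ` A \<subseteq> C"
  proof
    fix x assume "x \<in> (g \<circ> f) ` A"
    then obtain a where a: "a \<in> A" "x = g (f a)" by auto
    then have "f a \<in> B" using f(2) by auto
    then show "x \<in> C" using g(2) a(2) by auto
  qed
  moreover have "\<forall>u\<in>A. \<forall>v\<in>A. {u,v} \<in> EA \<longleftrightarrow> {(g \<circ> f) u, (g \<circ> f) v} \<in> EC"
  proof (intro ballI)
    fix u v assume "u \<in> A" "v \<in> A"
    then have "f u \<in> B" "f v \<in> B" using f by auto
    then show "{u,v} \<in> EA \<longleftrightarrow> {(g \<circ> f) u, (g \<circ> f) v} \<in> EC" using f g \<open>u \<in> A\<close> \<open>v \<in> A\<close> by simp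
  qed
  ultimately show ?thesis unfolding induced_subgraph_def by blast
qed

lemma p4_embed:
  assumes sg: "simple_graph V E" and np: "\<not> p4free V E"
  shows "induced_subgraph P4_V P4_E V E"
proof -
  obtain a b c d where abcd: "a \<in> V" "b \<in> V" "c \<in> V" "d \<in> V" and e: "{a,b} \<in> E" "{b,c} \<in> E" "{c,d} \<in> E"
    and ne: "{a,c} \<notin> E" "{a,d} \<notin> E" "{b,d} \<notin> E"
    using np unfolding p4free_def by blast
  have lf: "\<forall>u. {u,u} \<notin> E" using simple_loopfree[OF sg] .
  have e': "{b,a} \<in> E" "{c,b} \<in> E" "{d,c} \<in> E" using e by (simp_all add: insert_commute)
  have ne': "{c,a} \<notin> E" "{d,a} \<notin> E" "{d,b} \<notin> E" using ne by (simp_all add: insert_commute)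
  have dist: "a \<noteq> b" "b \<noteq> c" "c \<noteq> d" "a \<noteq> c" "a \<noteq> d" "b \<noteq> d"
    using e e' ne ne' lf by metis+
  define f where "f = (\<lambda>i::nat. if i = 0 then a else if i = 1 then b else if i = 2 then c else d)"
  have "inj_on f P4_V" unfolding inj_on_def P4_V_def f_def using dist by auto
  moreover have "f ` P4_V \<subseteq> V" unfolding P4_V_def f_def using abcd by auto
  moreover have "\<forall>u\<in>P4_V. \<forall>v\<in>P4_V. {u,v} \<in> P4_E \<longleftrightarrow> {f u, f v} \<in> E"
    unfolding P4_V_def P4_E_def f_def using e e' ne ne' lf by (simp add: doubleton_eq_iff)
  ultimately show ?thesis unfolding induced_subgraph_def by blast
qed

lemma p31_embed:
  assumes sg: "simple_graph V E" and np: "\<not> p31free V E"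
  shows "induced_subgraph P3P1_V P3P1_E V E"
proof -
  obtain a b c d where abcd: "a \<in> V" "b \<in> V" "c \<in> V" "d \<in> V" and ac: "a \<noteq> c" and e: "{a,b} \<in> E" "{b,c} \<in> E"
    and ne: "{a,c} \<notin> E" "{d,a} \<notin> E" "{d,b} \<notin> E" "{d,c} \<notin> E"
    using np unfolding p31free_def by blast
  have lf: "\<forall>u. {u,u} \<notin> E" using simple_loopfree[OF sg] .
  have e': "{b,a} \<in> E" "{c,b} \<in> E" using e by (simp_all add: insert_commute)
  have ne': "{c,a} \<notin> E" "{a,d} \<notin> E" "{b,d} \<notin> E" "{c,d} \<notin> E" using ne by (simp_all add: insert_commute)
  have dist: "a \<noteq> b" "b \<noteq> c" "a \<noteq> d" "b \<noteq> d" "c \<noteq> d"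
    using e e' ne ne' lf by metis+
  define f where "f = (\<lambda>i::nat. if i = 0 then a else if i = 1 then b else if i = 2 then c else d)"
  have "inj_on f P3P1_V" unfolding inj_on_def P3P1_V_def f_def using dist ac by auto
  moreover have "f ` P3P1_V \<subseteq> V" unfolding P3P1_V_def f_def using abcd by auto
  moreover have "\<forall>u\<in>P3P1_V. \<forall>v\<in>P3P1_V. {u,v} \<in> P3P1_E \<longleftrightarrow> {f u, f v} \<in> E"
    unfolding P3P1_V_def P3P1_E_def f_def using e e' ne ne' lf by (simp add: doubleton_eq_iff)
  ultimately show ?thesis unfolding induced_subgraph_def by blast
qed

lemma dir2:
  fixes VH :: "'a set" and EH :: "'a set set"
  assumes H: "induced_subgraph VH EH P4_V P4_E \<or> induced_subgraph VH EH P3P1_V P3P1_E"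
    and sg: "simple_graph (V::nat set) E" and free: "\<not> induced_subgraph VH EH V E"
    and l: "l \<ge> chromatic_number V E + 1"
  shows "mixing V E l"
proof -
  have fin: "finite V" using sg unfolding simple_graph_def by blast
  have "good V E"
  proof (cases "induced_subgraph VH EH P4_V P4_E")
    case True
    have "p4free V E"
    proof (rule ccontr)
      assume "\<not> p4free V E"
      then have "induced_subgraph P4_V P4_E V E" using p4_embed[OF sg] by blast
      then show False using isub_trans[OF True] free by blast
    qed
    then show ?thesis using p4_good fin by blast
  next
    case False
    then have H3: "induced_subgraph VH EH P3P1_V P3P1_E" using H by blast
    have "p31free V E"
    proof (rule ccontr)
      assume "\<not> p31free V E"
      then have "induced_subgraph P3P1_V P3P1_E V E" using p31_embed[OF sg] by blast
      then show False using isub_trans[OF H3] free by blast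
    qed
    then show ?thesis using p31_good fin simple_loopfree[OF sg] by blast
  qed
  then show ?thesis using good_mixing[OF sg] l by simp
qed


definition edges_of :: "(nat \<times> nat) list \<Rightarrow> nat set set" where
  "edges_of L = (\<lambda>(a,b). {a,b}) ` set L"

lemma mem_edges_of: "{u,v} \<in> edges_of L \<longleftrightarrow> (u,v) \<in> set L \<or> (v,u) \<in> set L"
  unfolding edges_of_def by (auto simp: doubleton_eq_iff)

lemma mem_edges_of1: "{u} \<in> edges_of L \<longleftrightarrow> (u,u) \<in> set L"
  using mem_edges_of[of u u L] by simp

lemma isubI:
  assumes "inj_on f A" "f ` A \<subseteq> B" "\<forall>u\<in>A. \<forall>v\<in>A. {u,v} \<in> EA \<longleftrightarrow> {f u, f v} \<in> EB"
  shows "induced_subgraph A EA B EB"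
  using assms unfolding induced_subgraph_def by blast

definition K22_V :: "nat set" where "K22_V = {0,1,2,3}"
definition K22_E :: "nat set set" where "K22_E = {{0,1},{2,3}}"
definition C6_V :: "nat set" where "C6_V = {0,1,2,3,4,5}"
definition C6_E :: "nat set set" where "C6_E = edges_of [(0,1),(1,2),(2,3),(3,4),(4,5),(5,0)]"

definition PT :: "nat set \<Rightarrow> bool" where
  "PT T \<longleftrightarrow> induced_subgraph T C6_E P4_V P4_E \<or> induced_subgraph T C6_E P3P1_V P3P1_E \<or>
     induced_subgraph K22_V K22_E T C6_E"

lemma c6c0: "PT {0,1,2,3,4,5}"
  unfolding PT_def
  apply (rule disjI2, rule disjI2)
  apply (rule isubI[where f="(\<lambda>x::nat. (if x = 0 then 0 else (if x = 1 then 1 else (if x = 2 then 3 else (if x = 3 then 4 else 0)))))"])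
  by (simp_all add: inj_on_def K22_V_def K22_E_def C6_E_def mem_edges_of mem_edges_of1 doubleton_eq_iff)

lemma c6c1: "PT {0,1,2,3,4}"
  unfolding PT_def
  apply (rule disjI2, rule disjI2)
  apply (rule isubI[where f="(\<lambda>x::nat. (if x = 0 then 0 else (if x = 1 then 1 else (if x = 2 then 3 else (if x = 3 then 4 else 0)))))"])
  by (simp_all add: inj_on_def K22_V_def K22_E_def C6_E_def mem_edges_of mem_edges_of1 doubleton_eq_iff)

lemma c6c2: "PT {0,1,2,3,5}"
  unfolding PT_def
  apply (rule disjI2, rule disjI2)
  apply (rule isubI[where f="(\<lambda>x::nat. (if x = 0 then 0 else (if x = 1 then 5 else (if x = 2 then 2 else (if x = 3 then 3 else 0)))))"])
  by (simp_all add: inj_on_def K22_V_def K22_E_def C6_E_def mem_edges_of mem_edges_of1 doubleton_eq_iff)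

lemma c6c3: "PT {0,1,2,3}"
  unfolding PT_def
  apply (rule disjI1)
  apply (rule isubI[where f="(\<lambda>x::nat. (if x = 0 then 0 else (if x = 1 then 1 else (if x = 2 then 2 else (if x = 3 then 3 else 0)))))"])
  by (simp_all add: inj_on_def P4_V_def P4_E_def C6_E_def mem_edges_of mem_edges_of1 doubleton_eq_iff)

lemma c6c4: "PT {0,1,2,4,5}"
  unfolding PT_def
  apply (rule disjI2, rule disjI2)
  apply (rule isubI[where f="(\<lambda>x::nat. (if x = 0 then 1 else (if x = 1 then 2 else (if x = 2 then 4 else (if x = 3 then 5 else 0)))))"])
  by (simp_all add: inj_on_def K22_V_def K22_E_def C6_E_def mem_edges_of mem_edges_of1 doubleton_eq_iff)

lemma c6c5: "PT {0,1,2,4}"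
  unfolding PT_def
  apply (rule disjI2, rule disjI1)
  apply (rule isubI[where f="(\<lambda>x::nat. (if x = 0 then 0 else (if x = 1 then 1 else (if x = 2 then 2 else (if x = 4 then 3 else 0)))))"])
  by (simp_all add: inj_on_def P3P1_V_def P3P1_E_def C6_E_def mem_edges_of mem_edges_of1 doubleton_eq_iff)

lemma c6c6: "PT {0,1,2,5}"
  unfolding PT_def
  apply (rule disjI1)
  apply (rule isubI[where f="(\<lambda>x::nat. (if x = 0 then 1 else (if x = 1 then 2 else (if x = 2 then 3 else (if x = 5 then 0 else 0)))))"])
  by (simp_all add: inj_on_def P4_V_def P4_E_def C6_E_def mem_edges_of mem_edges_of1 doubleton_eq_iff)

lemma c6c7: "PT {0,1,2}"
  unfolding PT_def
  apply (rule disjI1)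
  apply (rule isubI[where f="(\<lambda>x::nat. (if x = 0 then 0 else (if x = 1 then 1 else (if x = 2 then 2 else 0))))"])
  by (simp_all add: inj_on_def P4_V_def P4_E_def C6_E_def mem_edges_of mem_edges_of1 doubleton_eq_iff)

lemma c6c8: "PT {0,1,3,4,5}"
  unfolding PT_def
  apply (rule disjI2, rule disjI2)
  apply (rule isubI[where f="(\<lambda>x::nat. (if x = 0 then 0 else (if x = 1 then 1 else (if x = 2 then 3 else (if x = 3 then 4 else 0)))))"])
  by (simp_all add: inj_on_def K22_V_def K22_E_def C6_E_def mem_edges_of mem_edges_of1 doubleton_eq_iff)

lemma c6c9: "PT {0,1,3,4}"
  unfolding PT_def
  apply (rule disjI2, rule disjI2)
  apply (rule isubI[where f="(\<lambda>x::nat. (if x = 0 then 0 else (if x = 1 then 1 else (if x = 2 then 3 else (if x = 3 then 4 else 0)))))"])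
  by (simp_all add: inj_on_def K22_V_def K22_E_def C6_E_def mem_edges_of mem_edges_of1 doubleton_eq_iff)

lemma c6c10: "PT {0,1,3,5}"
  unfolding PT_def
  apply (rule disjI2, rule disjI1)
  apply (rule isubI[where f="(\<lambda>x::nat. (if x = 0 then 1 else (if x = 1 then 0 else (if x = 3 then 3 else (if x = 5 then 2 else 0)))))"])
  by (simp_all add: inj_on_def P3P1_V_def P3P1_E_def C6_E_def mem_edges_of mem_edges_of1 doubleton_eq_iff)

lemma c6c11: "PT {0,1,3}"
  unfolding PT_def
  apply (rule disjI1)
  apply (rule isubI[where f="(\<lambda>x::nat. (if x = 0 then 0 else (if x = 1 then 1 else (if x = 3 then 3 else 0))))"])
  by (simp_all add: inj_on_def P4_V_def P4_E_def C6_E_def mem_edges_of mem_edges_of1 doubleton_eq_iff)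

lemma c6c12: "PT {0,1,4,5}"
  unfolding PT_def
  apply (rule disjI1)
  apply (rule isubI[where f="(\<lambda>x::nat. (if x = 0 then 1 else (if x = 1 then 0 else (if x = 4 then 3 else (if x = 5 then 2 else 0)))))"])
  by (simp_all add: inj_on_def P4_V_def P4_E_def C6_E_def mem_edges_of mem_edges_of1 doubleton_eq_iff)

lemma c6c13: "PT {0,1,4}"
  unfolding PT_def
  apply (rule disjI1)
  apply (rule isubI[where f="(\<lambda>x::nat. (if x = 0 then 0 else (if x = 1 then 1 else (if x = 4 then 3 else 0))))"])
  by (simp_all add: inj_on_def P4_V_def P4_E_def C6_E_def mem_edges_of mem_edges_of1 doubleton_eq_iff)

lemma c6c14: "PT {0,1,5}"
  unfolding PT_def
  apply (rule disjI1)
  apply (rule isubI[where f="(\<lambda>x::nat. (if x = 0 then 1 else (if x = 1 then 0 else (if x = 5 then 2 else 0))))"])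
  by (simp_all add: inj_on_def P4_V_def P4_E_def C6_E_def mem_edges_of mem_edges_of1 doubleton_eq_iff)

lemma c6c15: "PT {0,1}"
  unfolding PT_def
  apply (rule disjI1)
  apply (rule isubI[where f="(\<lambda>x::nat. (if x = 0 then 0 else (if x = 1 then 1 else 0)))"])
  by (simp_all add: inj_on_def P4_V_def P4_E_def C6_E_def mem_edges_of mem_edges_of1 doubleton_eq_iff)

lemma c6c16: "PT {0,2,3,4,5}"
  unfolding PT_def
  apply (rule disjI2, rule disjI2)
  apply (rule isubI[where f="(\<lambda>x::nat. (if x = 0 then 0 else (if x = 1 then 5 else (if x = 2 then 2 else (if x = 3 then 3 else 0)))))"])
  by (simp_all add: inj_on_def K22_V_def K22_E_def C6_E_def mem_edges_of mem_edges_of1 doubleton_eq_iff)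

lemma c6c17: "PT {0,2,3,4}"
  unfolding PT_def
  apply (rule disjI2, rule disjI1)
  apply (rule isubI[where f="(\<lambda>x::nat. (if x = 0 then 3 else (if x = 2 then 0 else (if x = 3 then 1 else (if x = 4 then 2 else 0)))))"])
  by (simp_all add: inj_on_def P3P1_V_def P3P1_E_def C6_E_def mem_edges_of mem_edges_of1 doubleton_eq_iff)

lemma c6c18: "PT {0,2,3,5}"
  unfolding PT_def
  apply (rule disjI2, rule disjI2)
  apply (rule isubI[where f="(\<lambda>x::nat. (if x = 0 then 0 else (if x = 1 then 5 else (if x = 2 then 2 else (if x = 3 then 3 else 0)))))"])
  by (simp_all add: inj_on_def K22_V_def K22_E_def C6_E_def mem_edges_of mem_edges_of1 doubleton_eq_iff)

lemma c6c19: "PT {0,2,3}"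
  unfolding PT_def
  apply (rule disjI1)
  apply (rule isubI[where f="(\<lambda>x::nat. (if x = 0 then 0 else (if x = 2 then 2 else (if x = 3 then 3 else 0))))"])
  by (simp_all add: inj_on_def P4_V_def P4_E_def C6_E_def mem_edges_of mem_edges_of1 doubleton_eq_iff)

lemma c6c20: "PT {0,2,4,5}"
  unfolding PT_def
  apply (rule disjI2, rule disjI1)
  apply (rule isubI[where f="(\<lambda>x::nat. (if x = 0 then 0 else (if x = 2 then 3 else (if x = 4 then 2 else (if x = 5 then 1 else 0)))))"])
  by (simp_all add: inj_on_def P3P1_V_def P3P1_E_def C6_E_def mem_edges_of mem_edges_of1 doubleton_eq_iff)

lemma c6c21: "PT {0,2,4}"
  unfolding PT_def
  apply (rule disjI2, rule disjI1)
  apply (rule isubI[where f="(\<lambda>x::nat. (if x = 0 then 0 else (if x = 2 then 2 else (if x = 4 then 3 else 0))))"])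
  by (simp_all add: inj_on_def P3P1_V_def P3P1_E_def C6_E_def mem_edges_of mem_edges_of1 doubleton_eq_iff)

lemma c6c22: "PT {0,2,5}"
  unfolding PT_def
  apply (rule disjI1)
  apply (rule isubI[where f="(\<lambda>x::nat. (if x = 0 then 0 else (if x = 2 then 3 else (if x = 5 then 1 else 0))))"])
  by (simp_all add: inj_on_def P4_V_def P4_E_def C6_E_def mem_edges_of mem_edges_of1 doubleton_eq_iff)

lemma c6c23: "PT {0,2}"
  unfolding PT_def
  apply (rule disjI1)
  apply (rule isubI[where f="(\<lambda>x::nat. (if x = 0 then 0 else (if x = 2 then 2 else 0)))"])
  by (simp_all add: inj_on_def P4_V_def P4_E_def C6_E_def mem_edges_of mem_edges_of1 doubleton_eq_iff)

lemma c6c24: "PT {0,3,4,5}"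
  unfolding PT_def
  apply (rule disjI1)
  apply (rule isubI[where f="(\<lambda>x::nat. (if x = 0 then 0 else (if x = 3 then 3 else (if x = 4 then 2 else (if x = 5 then 1 else 0)))))"])
  by (simp_all add: inj_on_def P4_V_def P4_E_def C6_E_def mem_edges_of mem_edges_of1 doubleton_eq_iff)

lemma c6c25: "PT {0,3,4}"
  unfolding PT_def
  apply (rule disjI1)
  apply (rule isubI[where f="(\<lambda>x::nat. (if x = 0 then 0 else (if x = 3 then 2 else (if x = 4 then 3 else 0))))"])
  by (simp_all add: inj_on_def P4_V_def P4_E_def C6_E_def mem_edges_of mem_edges_of1 doubleton_eq_iff)

lemma c6c26: "PT {0,3,5}"
  unfolding PT_def
  apply (rule disjI1)
  apply (rule isubI[where f="(\<lambda>x::nat. (if x = 0 then 0 else (if x = 3 then 3 else (if x = 5 then 1 else 0))))"])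
  by (simp_all add: inj_on_def P4_V_def P4_E_def C6_E_def mem_edges_of mem_edges_of1 doubleton_eq_iff)

lemma c6c27: "PT {0,3}"
  unfolding PT_def
  apply (rule disjI1)
  apply (rule isubI[where f="(\<lambda>x::nat. (if x = 0 then 0 else (if x = 3 then 2 else 0)))"])
  by (simp_all add: inj_on_def P4_V_def P4_E_def C6_E_def mem_edges_of mem_edges_of1 doubleton_eq_iff)

lemma c6c28: "PT {0,4,5}"
  unfolding PT_def
  apply (rule disjI1)
  apply (rule isubI[where f="(\<lambda>x::nat. (if x = 0 then 0 else (if x = 4 then 2 else (if x = 5 then 1 else 0))))"])
  by (simp_all add: inj_on_def P4_V_def P4_E_def C6_E_def mem_edges_of mem_edges_of1 doubleton_eq_iff)

lemma c6c29: "PT {0,4}"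
  unfolding PT_def
  apply (rule disjI1)
  apply (rule isubI[where f="(\<lambda>x::nat. (if x = 0 then 0 else (if x = 4 then 2 else 0)))"])
  by (simp_all add: inj_on_def P4_V_def P4_E_def C6_E_def mem_edges_of mem_edges_of1 doubleton_eq_iff)

lemma c6c30: "PT {0,5}"
  unfolding PT_def
  apply (rule disjI1)
  apply (rule isubI[where f="(\<lambda>x::nat. (if x = 0 then 0 else (if x = 5 then 1 else 0)))"])
  by (simp_all add: inj_on_def P4_V_def P4_E_def C6_E_def mem_edges_of mem_edges_of1 doubleton_eq_iff)

lemma c6c31: "PT {0}"
  unfolding PT_def
  apply (rule disjI1)
  apply (rule isubI[where f="(\<lambda>x::nat. (if x = 0 then 0 else 0))"])
  by (simp_all add: inj_on_def P4_V_def P4_E_def C6_E_def mem_edges_of mem_edges_of1 doubleton_eq_iff)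

lemma c6c32: "PT {1,2,3,4,5}"
  unfolding PT_def
  apply (rule disjI2, rule disjI2)
  apply (rule isubI[where f="(\<lambda>x::nat. (if x = 0 then 1 else (if x = 1 then 2 else (if x = 2 then 4 else (if x = 3 then 5 else 0)))))"])
  by (simp_all add: inj_on_def K22_V_def K22_E_def C6_E_def mem_edges_of mem_edges_of1 doubleton_eq_iff)

lemma c6c33: "PT {1,2,3,4}"
  unfolding PT_def
  apply (rule disjI1)
  apply (rule isubI[where f="(\<lambda>x::nat. (if x = 1 then 0 else (if x = 2 then 1 else (if x = 3 then 2 else (if x = 4 then 3 else 0)))))"])
  by (simp_all add: inj_on_def P4_V_def P4_E_def C6_E_def mem_edges_of mem_edges_of1 doubleton_eq_iff)

lemma c6c34: "PT {1,2,3,5}"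
  unfolding PT_def
  apply (rule disjI2, rule disjI1)
  apply (rule isubI[where f="(\<lambda>x::nat. (if x = 1 then 0 else (if x = 2 then 1 else (if x = 3 then 2 else (if x = 5 then 3 else 0)))))"])
  by (simp_all add: inj_on_def P3P1_V_def P3P1_E_def C6_E_def mem_edges_of mem_edges_of1 doubleton_eq_iff)

lemma c6c35: "PT {1,2,3}"
  unfolding PT_def
  apply (rule disjI1)
  apply (rule isubI[where f="(\<lambda>x::nat. (if x = 1 then 0 else (if x = 2 then 1 else (if x = 3 then 2 else 0))))"])
  by (simp_all add: inj_on_def P4_V_def P4_E_def C6_E_def mem_edges_of mem_edges_of1 doubleton_eq_iff)

lemma c6c36: "PT {1,2,4,5}"
  unfolding PT_def
  apply (rule disjI2, rule disjI2)
  apply (rule isubI[where f="(\<lambda>x::nat. (if x = 0 then 1 else (if x = 1 then 2 else (if x = 2 then 4 else (if x = 3 then 5 else 0)))))"])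
  by (simp_all add: inj_on_def K22_V_def K22_E_def C6_E_def mem_edges_of mem_edges_of1 doubleton_eq_iff)

lemma c6c37: "PT {1,2,4}"
  unfolding PT_def
  apply (rule disjI1)
  apply (rule isubI[where f="(\<lambda>x::nat. (if x = 1 then 0 else (if x = 2 then 1 else (if x = 4 then 3 else 0))))"])
  by (simp_all add: inj_on_def P4_V_def P4_E_def C6_E_def mem_edges_of mem_edges_of1 doubleton_eq_iff)

lemma c6c38: "PT {1,2,5}"
  unfolding PT_def
  apply (rule disjI1)
  apply (rule isubI[where f="(\<lambda>x::nat. (if x = 1 then 0 else (if x = 2 then 1 else (if x = 5 then 3 else 0))))"])
  by (simp_all add: inj_on_def P4_V_def P4_E_def C6_E_def mem_edges_of mem_edges_of1 doubleton_eq_iff)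

lemma c6c39: "PT {1,2}"
  unfolding PT_def
  apply (rule disjI1)
  apply (rule isubI[where f="(\<lambda>x::nat. (if x = 1 then 0 else (if x = 2 then 1 else 0)))"])
  by (simp_all add: inj_on_def P4_V_def P4_E_def C6_E_def mem_edges_of mem_edges_of1 doubleton_eq_iff)

lemma c6c40: "PT {1,3,4,5}"
  unfolding PT_def
  apply (rule disjI2, rule disjI1)
  apply (rule isubI[where f="(\<lambda>x::nat. (if x = 1 then 3 else (if x = 3 then 0 else (if x = 4 then 1 else (if x = 5 then 2 else 0)))))"])
  by (simp_all add: inj_on_def P3P1_V_def P3P1_E_def C6_E_def mem_edges_of mem_edges_of1 doubleton_eq_iff)

lemma c6c41: "PT {1,3,4}"
  unfolding PT_def
  apply (rule disjI1)
  apply (rule isubI[where f="(\<lambda>x::nat. (if x = 1 then 0 else (if x = 3 then 2 else (if x = 4 then 3 else 0))))"])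
  by (simp_all add: inj_on_def P4_V_def P4_E_def C6_E_def mem_edges_of mem_edges_of1 doubleton_eq_iff)

lemma c6c42: "PT {1,3,5}"
  unfolding PT_def
  apply (rule disjI2, rule disjI1)
  apply (rule isubI[where f="(\<lambda>x::nat. (if x = 1 then 0 else (if x = 3 then 2 else (if x = 5 then 3 else 0))))"])
  by (simp_all add: inj_on_def P3P1_V_def P3P1_E_def C6_E_def mem_edges_of mem_edges_of1 doubleton_eq_iff)

lemma c6c43: "PT {1,3}"
  unfolding PT_def
  apply (rule disjI1)
  apply (rule isubI[where f="(\<lambda>x::nat. (if x = 1 then 0 else (if x = 3 then 2 else 0)))"])
  by (simp_all add: inj_on_def P4_V_def P4_E_def C6_E_def mem_edges_of mem_edges_of1 doubleton_eq_iff)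

lemma c6c44: "PT {1,4,5}"
  unfolding PT_def
  apply (rule disjI1)
  apply (rule isubI[where f="(\<lambda>x::nat. (if x = 1 then 0 else (if x = 4 then 2 else (if x = 5 then 3 else 0))))"])
  by (simp_all add: inj_on_def P4_V_def P4_E_def C6_E_def mem_edges_of mem_edges_of1 doubleton_eq_iff)

lemma c6c45: "PT {1,4}"
  unfolding PT_def
  apply (rule disjI1)
  apply (rule isubI[where f="(\<lambda>x::nat. (if x = 1 then 0 else (if x = 4 then 2 else 0)))"])
  by (simp_all add: inj_on_def P4_V_def P4_E_def C6_E_def mem_edges_of mem_edges_of1 doubleton_eq_iff)

lemma c6c46: "PT {1,5}"
  unfolding PT_def
  apply (rule disjI1)
  apply (rule isubI[where f="(\<lambda>x::nat. (if x = 1 then 0 else (if x = 5 then 2 else 0)))"])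
  by (simp_all add: inj_on_def P4_V_def P4_E_def C6_E_def mem_edges_of mem_edges_of1 doubleton_eq_iff)

lemma c6c47: "PT {1}"
  unfolding PT_def
  apply (rule disjI1)
  apply (rule isubI[where f="(\<lambda>x::nat. (if x = 1 then 0 else 0))"])
  by (simp_all add: inj_on_def P4_V_def P4_E_def C6_E_def mem_edges_of mem_edges_of1 doubleton_eq_iff)

lemma c6c48: "PT {2,3,4,5}"
  unfolding PT_def
  apply (rule disjI1)
  apply (rule isubI[where f="(\<lambda>x::nat. (if x = 2 then 0 else (if x = 3 then 1 else (if x = 4 then 2 else (if x = 5 then 3 else 0)))))"])
  by (simp_all add: inj_on_def P4_V_def P4_E_def C6_E_def mem_edges_of mem_edges_of1 doubleton_eq_iff)

lemma c6c49: "PT {2,3,4}"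
  unfolding PT_def
  apply (rule disjI1)
  apply (rule isubI[where f="(\<lambda>x::nat. (if x = 2 then 0 else (if x = 3 then 1 else (if x = 4 then 2 else 0))))"])
  by (simp_all add: inj_on_def P4_V_def P4_E_def C6_E_def mem_edges_of mem_edges_of1 doubleton_eq_iff)

lemma c6c50: "PT {2,3,5}"
  unfolding PT_def
  apply (rule disjI1)
  apply (rule isubI[where f="(\<lambda>x::nat. (if x = 2 then 0 else (if x = 3 then 1 else (if x = 5 then 3 else 0))))"])
  by (simp_all add: inj_on_def P4_V_def P4_E_def C6_E_def mem_edges_of mem_edges_of1 doubleton_eq_iff)

lemma c6c51: "PT {2,3}"
  unfolding PT_def
  apply (rule disjI1)
  apply (rule isubI[where f="(\<lambda>x::nat. (if x = 2 then 0 else (if x = 3 then 1 else 0)))"])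
  by (simp_all add: inj_on_def P4_V_def P4_E_def C6_E_def mem_edges_of mem_edges_of1 doubleton_eq_iff)

lemma c6c52: "PT {2,4,5}"
  unfolding PT_def
  apply (rule disjI1)
  apply (rule isubI[where f="(\<lambda>x::nat. (if x = 2 then 0 else (if x = 4 then 2 else (if x = 5 then 3 else 0))))"])
  by (simp_all add: inj_on_def P4_V_def P4_E_def C6_E_def mem_edges_of mem_edges_of1 doubleton_eq_iff)

lemma c6c53: "PT {2,4}"
  unfolding PT_def
  apply (rule disjI1)
  apply (rule isubI[where f="(\<lambda>x::nat. (if x = 2 then 0 else (if x = 4 then 2 else 0)))"])
  by (simp_all add: inj_on_def P4_V_def P4_E_def C6_E_def mem_edges_of mem_edges_of1 doubleton_eq_iff)

lemma c6c54: "PT {2,5}"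
  unfolding PT_def
  apply (rule disjI1)
  apply (rule isubI[where f="(\<lambda>x::nat. (if x = 2 then 0 else (if x = 5 then 2 else 0)))"])
  by (simp_all add: inj_on_def P4_V_def P4_E_def C6_E_def mem_edges_of mem_edges_of1 doubleton_eq_iff)

lemma c6c55: "PT {2}"
  unfolding PT_def
  apply (rule disjI1)
  apply (rule isubI[where f="(\<lambda>x::nat. (if x = 2 then 0 else 0))"])
  by (simp_all add: inj_on_def P4_V_def P4_E_def C6_E_def mem_edges_of mem_edges_of1 doubleton_eq_iff)

lemma c6c56: "PT {3,4,5}"
  unfolding PT_def
  apply (rule disjI1)
  apply (rule isubI[where f="(\<lambda>x::nat. (if x = 3 then 0 else (if x = 4 then 1 else (if x = 5 then 2 else 0))))"])
  by (simp_all add: inj_on_def P4_V_def P4_E_def C6_E_def mem_edges_of mem_edges_of1 doubleton_eq_iff)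

lemma c6c57: "PT {3,4}"
  unfolding PT_def
  apply (rule disjI1)
  apply (rule isubI[where f="(\<lambda>x::nat. (if x = 3 then 0 else (if x = 4 then 1 else 0)))"])
  by (simp_all add: inj_on_def P4_V_def P4_E_def C6_E_def mem_edges_of mem_edges_of1 doubleton_eq_iff)

lemma c6c58: "PT {3,5}"
  unfolding PT_def
  apply (rule disjI1)
  apply (rule isubI[where f="(\<lambda>x::nat. (if x = 3 then 0 else (if x = 5 then 2 else 0)))"])
  by (simp_all add: inj_on_def P4_V_def P4_E_def C6_E_def mem_edges_of mem_edges_of1 doubleton_eq_iff)

lemma c6c59: "PT {3}"
  unfolding PT_def
  apply (rule disjI1)
  apply (rule isubI[where f="(\<lambda>x::nat. (if x = 3 then 0 else 0))"])
  by (simp_all add: inj_on_def P4_V_def P4_E_def C6_E_def mem_edges_of mem_edges_of1 doubleton_eq_iff)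

lemma c6c60: "PT {4,5}"
  unfolding PT_def
  apply (rule disjI1)
  apply (rule isubI[where f="(\<lambda>x::nat. (if x = 4 then 0 else (if x = 5 then 1 else 0)))"])
  by (simp_all add: inj_on_def P4_V_def P4_E_def C6_E_def mem_edges_of mem_edges_of1 doubleton_eq_iff)

lemma c6c61: "PT {4}"
  unfolding PT_def
  apply (rule disjI1)
  apply (rule isubI[where f="(\<lambda>x::nat. (if x = 4 then 0 else 0))"])
  by (simp_all add: inj_on_def P4_V_def P4_E_def C6_E_def mem_edges_of mem_edges_of1 doubleton_eq_iff)

lemma c6c62: "PT {5}"
  unfolding PT_def
  apply (rule disjI1)
  apply (rule isubI[where f="(\<lambda>x::nat. (if x = 5 then 0 else 0))"])
  by (simp_all add: inj_on_def P4_V_def P4_E_def C6_E_def mem_edges_of mem_edges_of1 doubleton_eq_iff)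

lemma c6c63: "PT {}"
  unfolding PT_def
  apply (rule disjI1)
  apply (rule isubI[where f="(\<lambda>x::nat. 0::nat)"])
  by (simp_all add: inj_on_def P4_V_def P4_E_def C6_E_def mem_edges_of mem_edges_of1 doubleton_eq_iff)

lemma c6_all:
  assumes T: "T \<subseteq> {0,1,2,3,4,5::nat}"
  shows "PT T"
  apply (cases "0 \<in> T"; cases "1 \<in> T"; cases "2 \<in> T"; cases "3 \<in> T"; cases "4 \<in> T"; cases "5 \<in> T")
  subgoal premises p proof -
    have "T = {0,1,2,3,4,5}" using p T by auto
    then show ?thesis using c6c0 by simp
  qed
  subgoal premises p proof -
    have "T = {0,1,2,3,4}" using p T by auto
    then show ?thesis using c6c1 by simp
  qed
  subgoal premises p proof -
    have "T = {0,1,2,3,5}" using p T by auto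
    then show ?thesis using c6c2 by simp
  qed
  subgoal premises p proof -
    have "T = {0,1,2,3}" using p T by auto
    then show ?thesis using c6c3 by simp
  qed
  subgoal premises p proof -
    have "T = {0,1,2,4,5}" using p T by auto
    then show ?thesis using c6c4 by simp
  qed
  subgoal premises p proof -
    have "T = {0,1,2,4}" using p T by auto
    then show ?thesis using c6c5 by simp
  qed
  subgoal premises p proof -
    have "T = {0,1,2,5}" using p T by auto
    then show ?thesis using c6c6 by simp
  qed
  subgoal premises p proof -
    have "T = {0,1,2}" using p T by auto
    then show ?thesis using c6c7 by simp
  qed
  subgoal premises p proof -
    have "T = {0,1,3,4,5}" using p T by auto
    then show ?thesis using c6c8 by simp
  qed
  subgoal premises p proof -
    have "T = {0,1,3,4}" using p T by auto
    then show ?thesis using c6c9 by simp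
  qed
  subgoal premises p proof -
    have "T = {0,1,3,5}" using p T by auto
    then show ?thesis using c6c10 by simp
  qed
  subgoal premises p proof -
    have "T = {0,1,3}" using p T by auto
    then show ?thesis using c6c11 by simp
  qed
  subgoal premises p proof -
    have "T = {0,1,4,5}" using p T by auto
    then show ?thesis using c6c12 by simp
  qed
  subgoal premises p proof -
    have "T = {0,1,4}" using p T by auto
    then show ?thesis using c6c13 by simp
  qed
  subgoal premises p proof -
    have "T = {0,1,5}" using p T by auto
    then show ?thesis using c6c14 by simp
  qed
  subgoal premises p proof -
    have "T = {0,1}" using p T by auto
    then show ?thesis using c6c15 by simp
  qed
  subgoal premises p proof -
    have "T = {0,2,3,4,5}" using p T by auto
    then show ?thesis using c6c16 by simp
  qed
  subgoal premises p proof -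
    have "T = {0,2,3,4}" using p T by auto
    then show ?thesis using c6c17 by simp
  qed
  subgoal premises p proof -
    have "T = {0,2,3,5}" using p T by auto
    then show ?thesis using c6c18 by simp
  qed
  subgoal premises p proof -
    have "T = {0,2,3}" using p T by auto
    then show ?thesis using c6c19 by simp
  qed
  subgoal premises p proof -
    have "T = {0,2,4,5}" using p T by auto
    then show ?thesis using c6c20 by simp
  qed
  subgoal premises p proof -
    have "T = {0,2,4}" using p T by auto
    then show ?thesis using c6c21 by simp
  qed
  subgoal premises p proof -
    have "T = {0,2,5}" using p T by auto
    then show ?thesis using c6c22 by simp
  qed
  subgoal premises p proof -
    have "T = {0,2}" using p T by auto
    then show ?thesis using c6c23 by simp
  qed
  subgoal premises p proof -
    have "T = {0,3,4,5}" using p T by auto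
    then show ?thesis using c6c24 by simp
  qed
  subgoal premises p proof -
    have "T = {0,3,4}" using p T by auto
    then show ?thesis using c6c25 by simp
  qed
  subgoal premises p proof -
    have "T = {0,3,5}" using p T by auto
    then show ?thesis using c6c26 by simp
  qed
  subgoal premises p proof -
    have "T = {0,3}" using p T by auto
    then show ?thesis using c6c27 by simp
  qed
  subgoal premises p proof -
    have "T = {0,4,5}" using p T by auto
    then show ?thesis using c6c28 by simp
  qed
  subgoal premises p proof -
    have "T = {0,4}" using p T by auto
    then show ?thesis using c6c29 by simp
  qed
  subgoal premises p proof -
    have "T = {0,5}" using p T by auto
    then show ?thesis using c6c30 by simp
  qed
  subgoal premises p proof -
    have "T = {0}" using p T by auto
    then show ?thesis using c6c31 by simp
  qed
  subgoal premises p proof -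
    have "T = {1,2,3,4,5}" using p T by auto
    then show ?thesis using c6c32 by simp
  qed
  subgoal premises p proof -
    have "T = {1,2,3,4}" using p T by auto
    then show ?thesis using c6c33 by simp
  qed
  subgoal premises p proof -
    have "T = {1,2,3,5}" using p T by auto
    then show ?thesis using c6c34 by simp
  qed
  subgoal premises p proof -
    have "T = {1,2,3}" using p T by auto
    then show ?thesis using c6c35 by simp
  qed
  subgoal premises p proof -
    have "T = {1,2,4,5}" using p T by auto
    then show ?thesis using c6c36 by simp
  qed
  subgoal premises p proof -
    have "T = {1,2,4}" using p T by auto
    then show ?thesis using c6c37 by simp
  qed
  subgoal premises p proof -
    have "T = {1,2,5}" using p T by auto
    then show ?thesis using c6c38 by simp
  qed
  subgoal premises p proof -
    have "T = {1,2}" using p T by auto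
    then show ?thesis using c6c39 by simp
  qed
  subgoal premises p proof -
    have "T = {1,3,4,5}" using p T by auto
    then show ?thesis using c6c40 by simp
  qed
  subgoal premises p proof -
    have "T = {1,3,4}" using p T by auto
    then show ?thesis using c6c41 by simp
  qed
  subgoal premises p proof -
    have "T = {1,3,5}" using p T by auto
    then show ?thesis using c6c42 by simp
  qed
  subgoal premises p proof -
    have "T = {1,3}" using p T by auto
    then show ?thesis using c6c43 by simp
  qed
  subgoal premises p proof -
    have "T = {1,4,5}" using p T by auto
    then show ?thesis using c6c44 by simp
  qed
  subgoal premises p proof -
    have "T = {1,4}" using p T by auto
    then show ?thesis using c6c45 by simp
  qed
  subgoal premises p proof -
    have "T = {1,5}" using p T by auto
    then show ?thesis using c6c46 by simp
  qed
  subgoal premises p proof -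
    have "T = {1}" using p T by auto
    then show ?thesis using c6c47 by simp
  qed
  subgoal premises p proof -
    have "T = {2,3,4,5}" using p T by auto
    then show ?thesis using c6c48 by simp
  qed
  subgoal premises p proof -
    have "T = {2,3,4}" using p T by auto
    then show ?thesis using c6c49 by simp
  qed
  subgoal premises p proof -
    have "T = {2,3,5}" using p T by auto
    then show ?thesis using c6c50 by simp
  qed
  subgoal premises p proof -
    have "T = {2,3}" using p T by auto
    then show ?thesis using c6c51 by simp
  qed
  subgoal premises p proof -
    have "T = {2,4,5}" using p T by auto
    then show ?thesis using c6c52 by simp
  qed
  subgoal premises p proof -
    have "T = {2,4}" using p T by auto
    then show ?thesis using c6c53 by simp
  qed
  subgoal premises p proof -
    have "T = {2,5}" using p T by auto
    then show ?thesis using c6c54 by simp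
  qed
  subgoal premises p proof -
    have "T = {2}" using p T by auto
    then show ?thesis using c6c55 by simp
  qed
  subgoal premises p proof -
    have "T = {3,4,5}" using p T by auto
    then show ?thesis using c6c56 by simp
  qed
  subgoal premises p proof -
    have "T = {3,4}" using p T by auto
    then show ?thesis using c6c57 by simp
  qed
  subgoal premises p proof -
    have "T = {3,5}" using p T by auto
    then show ?thesis using c6c58 by simp
  qed
  subgoal premises p proof -
    have "T = {3}" using p T by auto
    then show ?thesis using c6c59 by simp
  qed
  subgoal premises p proof -
    have "T = {4,5}" using p T by auto
    then show ?thesis using c6c60 by simp
  qed
  subgoal premises p proof -
    have "T = {4}" using p T by auto
    then show ?thesis using c6c61 by simp
  qed
  subgoal premises p proof -
    have "T = {5}" using p T by auto
    then show ?thesis using c6c62 by simp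
  qed
  subgoal premises p proof -
    have "T = {}" using p T by auto
    then show ?thesis using c6c63 by simp
  qed
  done


lemma isub_image:
  assumes "inj_on f A" "f ` A \<subseteq> B" "\<forall>u\<in>A. \<forall>v\<in>A. {u,v} \<in> EA \<longleftrightarrow> {f u, f v} \<in> EB"
  shows "induced_subgraph A EA (f ` A) EB"
  using isubI[OF assms(1) order_refl assms(3)] .

lemma isub_inv:
  assumes inj: "inj_on f A" and e: "\<forall>u\<in>A. \<forall>v\<in>A. {u,v} \<in> EA \<longleftrightarrow> {f u, f v} \<in> EB"
  shows "induced_subgraph (f ` A) EB A EA"
proof (rule isubI[where f = "inv_into A f"])
  show "inj_on (inv_into A f) (f ` A)" by (rule inj_on_inv_into) simp
  show "inv_into A f ` f ` A \<subseteq> A" by (auto intro: inv_into_into)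
  show "\<forall>u\<in>f ` A. \<forall>v\<in>f ` A. ({u, v} \<in> EB) = ({inv_into A f u, inv_into A f v} \<in> EA)"
  proof (intro ballI)
    fix x y assume "x \<in> f ` A" "y \<in> f ` A"
    then obtain a b where ab: "a \<in> A" "b \<in> A" "x = f a" "y = f b" by auto
    then have "inv_into A f x = a" "inv_into A f y = b" using inv_into_f_f[OF inj] by auto
    then show "({x, y} \<in> EB) = ({inv_into A f x, inv_into A f y} \<in> EA)" using e ab by simp
  qed
qed

lemma dir1_core:
  fixes VH :: "'a set"
  assumes c6: "induced_subgraph VH EH C6_V C6_E" and nk: "\<not> induced_subgraph K22_V K22_E VH EH"
  shows "induced_subgraph VH EH P4_V P4_E \<or> induced_subgraph VH EH P3P1_V P3P1_E"
proof -
  obtain f where f: "inj_on f VH" "f ` VH \<subseteq> C6_V" "\<forall>u\<in>VH. \<forall>v\<in>VH. {u,v} \<in> EH \<longleftrightarrow> {f u, f v} \<in> C6_E"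
    using c6 unfolding induced_subgraph_def by blast
  have "f ` VH \<subseteq> {0,1,2,3,4,5}" using f(2) unfolding C6_V_def .
  then have pt: "PT (f ` VH)" by (rule c6_all)
  have i1: "induced_subgraph VH EH (f ` VH) C6_E" using isub_image[OF f(1) f(2) f(3)] .
  have i2: "induced_subgraph (f ` VH) C6_E VH EH" using isub_inv[OF f(1) f(3)] .
  show ?thesis
    using pt unfolding PT_def
  proof (elim disjE)
    assume "induced_subgraph (f ` VH) C6_E P4_V P4_E"
    then show ?thesis using isub_trans[OF i1] by blast
  next
    assume "induced_subgraph (f ` VH) C6_E P3P1_V P3P1_E"
    then show ?thesis using isub_trans[OF i1] by blast
  next
    assume "induced_subgraph K22_V K22_E (f ` VH) C6_E"
    then show ?thesis using isub_trans[OF _ i2] nk by blast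
  qed
qed

lemma frozen_not_mixing:
  assumes sg: "simple_graph V E" and a: "\<alpha> \<in> colourings V E l" and b: "\<beta> \<in> colourings V E l"
    and ne: "\<alpha> \<noteq> \<beta>" and fr: "\<forall>v\<in>V. \<forall>c\<in>{1..l}. c \<noteq> \<alpha> v \<longrightarrow> (\<exists>u. {u,v} \<in> E \<and> \<alpha> u = c)"
  shows "\<not> mixing V E l"
proof
  assume "mixing V E l"
  then have "(\<alpha>,\<beta>) \<in> (recolour_rel V E l)\<^sup>*" using a b unfolding mixing_def by blast
  then have "\<alpha> = \<beta> \<or> (\<exists>\<gamma>. (\<alpha>,\<gamma>) \<in> recolour_rel V E l)"
    by (cases rule: converse_rtranclE) auto
  then obtain \<gamma> where "(\<alpha>,\<gamma>) \<in> recolour_rel V E l" using ne by blast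
  then have g: "\<gamma> \<in> colourings V E l" and cd: "card {v. \<alpha> v \<noteq> \<gamma> v} = 1" unfolding recolour_rel_def by auto
  then obtain v where v: "{v. \<alpha> v \<noteq> \<gamma> v} = {v}" using card_1_singletonE by blast
  then have agv: "\<alpha> v \<noteq> \<gamma> v" and agu: "\<And>u. u \<noteq> v \<Longrightarrow> \<alpha> u = \<gamma> u" by auto
  have pa: "proper V E {1..l} \<alpha>" "\<forall>x. x \<notin> V \<longrightarrow> \<alpha> x = 0" using colourings_iff[OF sg] a by blast+
  have pg: "proper V E {1..l} \<gamma>" "\<forall>x. x \<notin> V \<longrightarrow> \<gamma> x = 0" using colourings_iff[OF sg] g by blast+
  have vV: "v \<in> V" using pa(2) pg(2) agv by metis
  then have "\<gamma> v \<in> {1..l}" using pg(1) unfolding proper_def by blast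
  then obtain u where u: "{u,v} \<in> E" "\<alpha> u = \<gamma> v" using fr vV agv by metis
  have "u \<noteq> v" using u(2) agv by auto
  then have "\<gamma> u = \<gamma> v" using agu u(2) by metis
  moreover have "u \<in> V" using simple_edge_in[OF sg u(1)] by blast
  ultimately show False using pg(1) u(1) vV unfolding proper_def by blast
qed

lemma simple_edges_of:
  assumes "finite V" "\<forall>(a,b)\<in>set L. a \<noteq> b \<and> a \<in> V \<and> b \<in> V"
  shows "simple_graph V (edges_of L)"
  using assms unfolding simple_graph_def edges_of_def by fastforce

lemma col_edges_of:
  assumes "\<forall>v\<in>V. \<alpha> v \<in> {1..l}" "\<forall>v. v \<notin> V \<longrightarrow> \<alpha> v = 0" "\<forall>(a,b)\<in>set L. \<alpha> a \<noteq> \<alpha> b"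
  shows "\<alpha> \<in> colourings V (edges_of L) l"
proof -
  have "\<alpha> u \<noteq> \<alpha> v" if "{u,v} \<in> edges_of L" for u v
    using that assms(3) unfolding mem_edges_of by fastforce
  then show ?thesis using assms(1,2) unfolding colourings_def by blast
qed

lemma chrom_le:
  assumes "\<gamma> \<in> colourings V E k" shows "chromatic_number V E \<le> k"
  unfolding chromatic_number_def using assms by (metis (mono_tags, lifting) Least_le empty_iff)

definition C6_L :: "(nat \<times> nat) list" where "C6_L = [(0,1),(1,2),(2,3),(3,4),(4,5),(5,0)]"

lemma C6_E_alt: "C6_E = edges_of C6_L" unfolding C6_E_def C6_L_def ..

lemma C6_simple: "simple_graph C6_V C6_E"
  unfolding C6_E_alt by (rule simple_edges_of) (simp_all add: C6_V_def C6_L_def)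

definition a6 :: "nat \<Rightarrow> nat" where "a6 x = (if x \<in> C6_V then x mod 3 + 1 else 0)"
definition b6 :: "nat \<Rightarrow> nat" where "b6 x = (if x \<in> C6_V then (x + 1) mod 3 + 1 else 0)"
definition g6 :: "nat \<Rightarrow> nat" where "g6 x = (if x \<in> C6_V then x mod 2 + 1 else 0)"

lemma a6_col: "a6 \<in> colourings C6_V C6_E 3"
  unfolding C6_E_alt by (rule col_edges_of) (simp_all add: a6_def C6_V_def C6_L_def)
lemma b6_col: "b6 \<in> colourings C6_V C6_E 3"
  unfolding C6_E_alt by (rule col_edges_of) (simp_all add: b6_def C6_V_def C6_L_def)
lemma g6_col: "g6 \<in> colourings C6_V C6_E 2"
  unfolding C6_E_alt by (rule col_edges_of) (simp_all add: g6_def C6_V_def C6_L_def)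

lemma C6_not_mixing: "\<not> mixing C6_V C6_E 3"
proof (rule frozen_not_mixing[OF C6_simple a6_col b6_col])
  show "a6 \<noteq> b6"
  proof
    assume "a6 = b6" then have "a6 0 = b6 0" by simp
    then show False unfolding a6_def b6_def C6_V_def by simp
  qed
  have e: "{1..3::nat} = {1,2,3}" by auto
  show "\<forall>v\<in>C6_V. \<forall>c\<in>{1..3}. c \<noteq> a6 v \<longrightarrow> (\<exists>u. {u, v} \<in> C6_E \<and> a6 u = c)"
    unfolding e C6_E_alt mem_edges_of by (auto simp: C6_V_def C6_L_def a6_def)
qed

definition G2_V :: "nat set" where "G2_V = {0,1,2,3,4,5,6,7,8,9}"
definition G2_L :: "(nat \<times> nat) list" where "G2_L = [(0,2),(0,3),(0,4),(0,5),(0,6),(0,7),(0,8),(1,2),(1,3),(1,5),(1,7),(1,8),(1,9),(2,4),(2,6),(2,7),(2,8),(2,9),(3,4),(3,5),(3,6),(3,9),(4,7),(4,8),(4,9),(5,6),(5,7),(5,8),(6,8),(6,9),(7,9)]"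
definition G2_E :: "nat set set" where "G2_E = edges_of G2_L"
definition NB :: "nat \<Rightarrow> nat list" where "NB = (\<lambda>x::nat. (if x = 0 then [2,3,4,5,6,7,8] else (if x = 1 then [2,3,5,7,8,9] else (if x = 2 then [0,1,4,6,7,8,9] else (if x = 3 then [0,1,4,5,6,9] else (if x = 4 then [0,2,3,7,8,9] else (if x = 5 then [0,1,3,6,7,8] else (if x = 6 then [0,2,3,5,8,9] else (if x = 7 then [0,1,2,4,5,9] else (if x = 8 then [0,1,2,4,5,6] else (if x = 9 then [1,2,3,4,6,7] else [])))))))))))"
definition a2 :: "nat \<Rightarrow> nat" where "a2 x = (if x \<in> G2_V then x div 2 + 1 else 0)"
definition b2 :: "nat \<Rightarrow> nat" where "b2 x = (if x \<in> G2_V then (x div 2 + 1) mod 5 + 1 else 0)"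
definition g2 :: "nat \<Rightarrow> nat" where "g2 = (\<lambda>x::nat. (if x = 0 then 1 else (if x = 1 then 3 else (if x = 2 then 2 else (if x = 3 then 4 else (if x = 4 then 3 else (if x = 5 then 2 else (if x = 6 then 3 else (if x = 7 then 4 else (if x = 8 then 4 else (if x = 9 then 1 else 0)))))))))))"

lemma G2_simple: "simple_graph G2_V G2_E"
  unfolding G2_E_def by (rule simple_edges_of) (simp_all add: G2_V_def G2_L_def)

lemma a2_col: "a2 \<in> colourings G2_V G2_E 5"
  unfolding G2_E_def by (rule col_edges_of) (simp_all add: a2_def G2_V_def G2_L_def)
lemma b2_col: "b2 \<in> colourings G2_V G2_E 5"
  unfolding G2_E_def by (rule col_edges_of) (simp_all add: b2_def G2_V_def G2_L_def)
lemma g2_col: "g2 \<in> colourings G2_V G2_E 4"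
  unfolding G2_E_def by (rule col_edges_of) (simp_all add: g2_def G2_V_def G2_L_def)

lemma NB_adj: "\<forall>v\<in>G2_V. \<forall>u\<in>set (NB v). (u,v) \<in> set G2_L \<or> (v,u) \<in> set G2_L"
  by (simp add: G2_V_def NB_def G2_L_def)

lemma NB_E: "v \<in> G2_V \<Longrightarrow> u \<in> set (NB v) \<Longrightarrow> {u,v} \<in> G2_E"
  using NB_adj unfolding G2_E_def mem_edges_of by blast

lemma G2_not_mixing: "\<not> mixing G2_V G2_E 5"
proof (rule frozen_not_mixing[OF G2_simple a2_col b2_col])
  show "a2 \<noteq> b2"
  proof
    assume "a2 = b2" then have "a2 0 = b2 0" by simp
    then show False unfolding a2_def b2_def G2_V_def by simp
  qed
  have e: "{1..5::nat} = {1,2,3,4,5}" by auto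
  have fr: "\<forall>v\<in>G2_V. \<forall>c\<in>{1,2,3,4,5}. c \<noteq> a2 v \<longrightarrow> (\<exists>u\<in>set (NB v). a2 u = c)"
    by (simp add: G2_V_def NB_def a2_def)
  show "\<forall>v\<in>G2_V. \<forall>c\<in>{1..5}. c \<noteq> a2 v \<longrightarrow> (\<exists>u. {u, v} \<in> G2_E \<and> a2 u = c)"
    unfolding e using fr NB_E by blast
qed

lemma G2_core: "\<forall>(a,b)\<in>set G2_L. \<forall>(c,d)\<in>set G2_L. c \<in> set (NB a) \<or> d \<in> set (NB a) \<or> c \<in> set (NB b) \<or> d \<in> set (NB b)"
  by (simp add: G2_L_def NB_def)

lemma G2_no2k2: "\<not> induced_subgraph K22_V K22_E G2_V G2_E"
proof
  assume "induced_subgraph K22_V K22_E G2_V G2_E"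
  then obtain f where f: "f ` K22_V \<subseteq> G2_V" "\<forall>u\<in>K22_V. \<forall>v\<in>K22_V. {u,v} \<in> K22_E \<longleftrightarrow> {f u, f v} \<in> G2_E"
    unfolding induced_subgraph_def by blast
  have ab: "{f 0, f 1} \<in> G2_E" and cd: "{f 2, f 3} \<in> G2_E" and n: "{f 0, f 2} \<notin> G2_E" "{f 0, f 3} \<notin> G2_E"
    "{f 1, f 2} \<notin> G2_E" "{f 1, f 3} \<notin> G2_E"
    using f(2) unfolding K22_V_def K22_E_def by (simp_all add: doubleton_eq_iff)
  have V: "f 0 \<in> G2_V" "f 1 \<in> G2_V" using f(1) unfolding K22_V_def by auto
  have n': "{f 2, f 0} \<notin> G2_E" "{f 3, f 0} \<notin> G2_E" "{f 2, f 1} \<notin> G2_E" "{f 3, f 1} \<notin> G2_E"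
    using n by (simp_all add: insert_commute)
  have "(f 0, f 1) \<in> set G2_L \<or> (f 1, f 0) \<in> set G2_L" using ab unfolding G2_E_def mem_edges_of .
  moreover have "(f 2, f 3) \<in> set G2_L \<or> (f 3, f 2) \<in> set G2_L" using cd unfolding G2_E_def mem_edges_of .
  ultimately have "f 2 \<in> set (NB (f 0)) \<or> f 3 \<in> set (NB (f 0)) \<or> f 2 \<in> set (NB (f 1)) \<or> f 3 \<in> set (NB (f 1))"
    using G2_core by fastforce
  then show False using NB_E V n' by blast
qed

lemma dir1:
  fixes VH :: "'a set" and EH :: "'a set set"
  assumes mixH: "\<forall>(V :: nat set) E. simple_graph V E \<and> \<not> induced_subgraph VH EH V E \<longrightarrow>
            (\<forall>l. l \<ge> chromatic_number V E + 1 \<longrightarrow> mixing V E l)"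
  shows "induced_subgraph VH EH P4_V P4_E \<or> induced_subgraph VH EH P3P1_V P3P1_E"
proof -
  have c6: "induced_subgraph VH EH C6_V C6_E"
  proof (rule ccontr)
    assume "\<not> induced_subgraph VH EH C6_V C6_E"
    moreover have "chromatic_number C6_V C6_E + 1 \<le> 3" using chrom_le[OF g6_col] by simp
    ultimately have "mixing C6_V C6_E 3" using mixH C6_simple by blast
    then show False using C6_not_mixing by blast
  qed
  have g2: "induced_subgraph VH EH G2_V G2_E"
  proof (rule ccontr)
    assume "\<not> induced_subgraph VH EH G2_V G2_E"
    moreover have "chromatic_number G2_V G2_E + 1 \<le> 5" using chrom_le[OF g2_col] by simp
    ultimately have "mixing G2_V G2_E 5" using mixH G2_simple by blast
    then show False using G2_not_mixing by blast
  qed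
  have "\<not> induced_subgraph K22_V K22_E VH EH" using isub_trans[OF _ g2] G2_no2k2 by blast
  then show ?thesis using dir1_core[OF c6] by blast
qed

theorem theorem3:
  fixes VH :: "'a set" and EH :: "'a set set"
  assumes "simple_graph VH EH"
  shows "(\<forall>(V :: nat set) E. simple_graph V E \<and> \<not> induced_subgraph VH EH V E \<longrightarrow>
            (\<forall>l. l \<ge> chromatic_number V E + 1 \<longrightarrow> mixing V E l))
         \<longleftrightarrow> (induced_subgraph VH EH P4_V P4_E \<or> induced_subgraph VH EH P3P1_V P3P1_E)"
proof
  assume "\<forall>(V :: nat set) E. simple_graph V E \<and> \<not> induced_subgraph VH EH V E \<longrightarrow>
            (\<forall>l. l \<ge> chromatic_number V E + 1 \<longrightarrow> mixing V E l)"
  then show "induced_subgraph VH EH P4_V P4_E \<or> induced_subgraph VH EH P3P1_V P3P1_E" by (rule dir1)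
next
  assume H: "induced_subgraph VH EH P4_V P4_E \<or> induced_subgraph VH EH P3P1_V P3P1_E"
  show "\<forall>(V :: nat set) E. simple_graph V E \<and> \<not> induced_subgraph VH EH V E \<longrightarrow>
            (\<forall>l. l \<ge> chromatic_number V E + 1 \<longrightarrow> mixing V E l)"
    using dir2[OF H] by blast
qed


end
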